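(* Define operators $(A_j)_{j\ge1}$ on $\mathcal P=\mathbb Q(b)[p_1,p_2,\dots]$ by $A_{j+1}f:=\Theta_YY_+\Lambda_Y^j\big(\frac{y_0}{1+b}f\big)$ for $j\ge0$ and $f\in\mathcal P$. Then $A_1$ is multiplication by $p_1/(1+b)$ and $A_{j+1}=[D_\alpha,A_j]$ for all $j\ge1$, as operators on $\mathcal P$.
   Context: Variables $b$, $\alpha=1+b$, $\mathbf p=(p_i)_{i\ge1}$, $\bm y=(y_i)_{i\ge0}$. Operators on polynomials in $\mathbf p,\bm y$: $\Theta_Y=\sum_{i\ge1}p_i\frac{\partial}{\partial y_i}$; $Y_+=\sum_{i\ge0}y_{i+1}\frac{\partial}{\partial y_i}$; $\Lambda_Y=(1+b)\sum_{i,j\ge1}iy_{i+j-1}\frac{\partial^2}{\partial p_i\partial y_{j-1}}+\sum_{i,j\ge1}y_{i-1}p_j\frac{\partial}{\partial y_{i+j-1}}+b\sum_{i\ge0}iy_i\frac{\partial}{\partial y_i}$. The Laplace–Beltrami operator is $D_\alpha=\frac12\Big((1+b)\sum_{i,j\ge1}ijp_{i+j}\frac{\partial^2}{\partial p_i\partial p_j}+\sum_{i,j\ge1}(i+j)p_ip_j\frac{\partial}{\partial p_{i+j}}+b\sum_{i\ge1}i(i-1)p_i\frac{\partial}{\partial p_i}\Big)$. $[A,B]=AB-BA$. *)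

theory Defs
  imports "HOL-Library.Poly_Mapping" "HOL-Computational_Algebra.Polynomial"
    "HOL-Computational_Algebra.Fraction_Field"
begin

type_synonym K = "rat poly fract"

definition bb :: K where "bb = Fract [:0, 1:] 1"

datatype var = P nat | Y nat

type_synonym mpoly = "(var \<Rightarrow>\<^sub>0 nat) \<Rightarrow>\<^sub>0 K"

definition vr :: "var \<Rightarrow> mpoly" where
  "vr v = Poly_Mapping.single (Poly_Mapping.single v 1) 1"

definition cst :: "K \<Rightarrow> mpoly" where
  "cst c = Poly_Mapping.single 0 c"

definition pd :: "var \<Rightarrow> mpoly \<Rightarrow> mpoly" where
  "pd v f = (\<Sum>m\<in>Poly_Mapping.keys f. Poly_Mapping.single (m - Poly_Mapping.single v 1)
                               (Poly_Mapping.lookup f m * of_nat (Poly_Mapping.lookup m v)))"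

definition vars :: "mpoly \<Rightarrow> var set" where
  "vars f = (\<Union>m\<in>Poly_Mapping.keys f. Poly_Mapping.keys m)"

text \<open>Indices of variables occurring in f (all other terms of the infinite sums vanish).\<close>
definition Pidx :: "mpoly \<Rightarrow> nat set" where
  "Pidx f = {i. P i \<in> vars f \<and> 1 \<le> i}"

definition Yidx :: "mpoly \<Rightarrow> nat set" where
  "Yidx f = {i. Y i \<in> vars f}"

definition ThetaY :: "mpoly \<Rightarrow> mpoly" where
  "ThetaY f = (\<Sum>i\<in>{i\<in>Yidx f. 1 \<le> i}. vr (P i) * pd (Y i) f)"

definition Yplus :: "mpoly \<Rightarrow> mpoly" where
  "Yplus f = (\<Sum>i\<in>Yidx f. vr (Y (i+1)) * pd (Y i) f)"

text \<open>Lambda_Y. In the first sum put k = j-1 (k>=0); in the second sum put n = i+j-1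
  (so j ranges over 1..n and i-1 = n-j).\<close>
definition LambdaY :: "mpoly \<Rightarrow> mpoly" where
  "LambdaY f =
     cst (1 + bb) * (\<Sum>i\<in>Pidx f. \<Sum>k\<in>Yidx f.
         cst (of_nat i) * vr (Y (i+k)) * pd (P i) (pd (Y k) f))
   + (\<Sum>n\<in>Yidx f. \<Sum>j\<in>{1..n}. vr (Y (n-j)) * vr (P j) * pd (Y n) f)
   + cst bb * (\<Sum>i\<in>Yidx f. cst (of_nat i) * vr (Y i) * pd (Y i) f)"

text \<open>Laplace-Beltrami operator D_alpha. In the second sum put n = i+j.\<close>
definition Dalpha :: "mpoly \<Rightarrow> mpoly" where
  "Dalpha f = cst (inverse 2) *
    ( cst (1 + bb) * (\<Sum>i\<in>Pidx f. \<Sum>j\<in>Pidx f.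
         cst (of_nat (i*j)) * vr (P (i+j)) * pd (P i) (pd (P j) f))
    + (\<Sum>n\<in>Pidx f. \<Sum>i\<in>{1..<n}. cst (of_nat n) * vr (P i) * vr (P (n-i)) * pd (P n) f)
    + cst bb * (\<Sum>i\<in>Pidx f. cst (of_nat (i*(i-1))) * vr (P i) * pd (P i) f))"

definition inP :: "mpoly \<Rightarrow> bool" where
  "inP f \<longleftrightarrow> vars f \<subseteq> {P i | i. 1 \<le> i}"

text \<open>A_{j+1} f = Theta_Y Y_+ Lambda_Y^j (y_0/(1+b) f), i.e. A_j uses Lambda_Y^(j-1), j>=1.\<close>
definition Aop :: "nat \<Rightarrow> mpoly \<Rightarrow> mpoly" where
  "Aop j f = ThetaY (Yplus ((LambdaY ^^ (j - 1)) (cst (inverse (1 + bb)) * vr (Y 0) * f)))"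

end

theory Submission
  imports Defs
begin


lemma lookup_minus_nat: "Poly_Mapping.lookup (a - b) k = Poly_Mapping.lookup a k - (Poly_Mapping.lookup b k::nat)"
  by (simp add: minus_poly_mapping.rep_eq)

lemma mpoly_expand: "(f::'a \<Rightarrow>\<^sub>0 'b::comm_monoid_add) = (\<Sum>m\<in>Poly_Mapping.keys f. Poly_Mapping.single m (Poly_Mapping.lookup f m))"
  by (rule poly_mapping_eqI) (simp add: lookup_sum lookup_single when_def in_keys_iff sum.delta)

lemma pd_superset:
  assumes "finite S" "Poly_Mapping.keys f \<subseteq> S"
  shows "pd v f = (\<Sum>m\<in>S. Poly_Mapping.single (m - Poly_Mapping.single v 1)
                               (Poly_Mapping.lookup f m * of_nat (Poly_Mapping.lookup m v)))"
  unfolding pd_def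
  by (rule sum.mono_neutral_left) (use assms in \<open>auto simp: in_keys_iff\<close>)

lemma pd_add: "pd v (f + g) = pd v f + pd v g"
proof -
  let ?S = "Poly_Mapping.keys f \<union> Poly_Mapping.keys g \<union> Poly_Mapping.keys (f+g)"
  have "pd v (f+g) = (\<Sum>m\<in>?S. Poly_Mapping.single (m - Poly_Mapping.single v 1)
          (Poly_Mapping.lookup (f+g) m * of_nat (Poly_Mapping.lookup m v)))"
    by (rule pd_superset) auto
  also have "\<dots> = (\<Sum>m\<in>?S. Poly_Mapping.single (m - Poly_Mapping.single v 1)
          (Poly_Mapping.lookup f m * of_nat (Poly_Mapping.lookup m v))) +
        (\<Sum>m\<in>?S. Poly_Mapping.single (m - Poly_Mapping.single v 1)
          (Poly_Mapping.lookup g m * of_nat (Poly_Mapping.lookup m v)))"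
    by (simp add: lookup_add distrib_right single_add sum.distrib)
  also have "\<dots> = pd v f + pd v g"
    by (subst (1 2) pd_superset[of ?S]) auto
  finally show ?thesis .
qed

lemma pd_zero[simp]: "pd v 0 = 0"
  by (simp add: pd_def)

lemma pd_sum: "pd v (\<Sum>i\<in>I. f i) = (\<Sum>i\<in>I. pd v (f i))"
  by (induction I rule: infinite_finite_induct) (auto simp: pd_add)

lemma pd_single: "pd v (Poly_Mapping.single a c) = Poly_Mapping.single (a - Poly_Mapping.single v 1) (c * of_nat (Poly_Mapping.lookup a v))"
  by (subst pd_superset[of "{a}"]) auto

lemma minus_add_swap:
  assumes "Poly_Mapping.lookup a v > 0"
  shows "a - Poly_Mapping.single v 1 + b = a + b - Poly_Mapping.single v (1::nat)"
  by (rule poly_mapping_eqI) (use assms in \<open>auto simp: lookup_add lookup_minus_nat lookup_single when_def\<close>)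

lemma pd_mult_single:
  "pd v (Poly_Mapping.single a c * Poly_Mapping.single b d) =
   pd v (Poly_Mapping.single a c) * Poly_Mapping.single b d + Poly_Mapping.single a c * pd v (Poly_Mapping.single b (d::K))"
proof -
  have 1: "Poly_Mapping.single (a - Poly_Mapping.single v 1 + b) (c * of_nat (Poly_Mapping.lookup a v) * d)
        = Poly_Mapping.single (a + b - Poly_Mapping.single v 1) (c * d * of_nat (Poly_Mapping.lookup a v))"
    using minus_add_swap[of a v b] by (cases "Poly_Mapping.lookup a v = 0") (auto simp: mult_ac)
  have 2: "Poly_Mapping.single (a + (b - Poly_Mapping.single v 1)) (c * (d * of_nat (Poly_Mapping.lookup b v)))
        = Poly_Mapping.single (a + b - Poly_Mapping.single v 1) (c * d * of_nat (Poly_Mapping.lookup b v))"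
    using minus_add_swap[of b v a] by (cases "Poly_Mapping.lookup b v = 0") (auto simp: add.commute mult_ac)
  show ?thesis
    using 1 2 by (simp add: mult_single pd_single lookup_add distrib_left flip: single_add)
qed

lemma pd_mult_sums:
  assumes "\<And>a b. pd v (F a * G b) = pd v (F a) * G b + F a * pd v (G b :: mpoly)"
  shows "pd v ((\<Sum>a\<in>A. F a) * (\<Sum>b\<in>B. G b)) = pd v (\<Sum>a\<in>A. F a) * (\<Sum>b\<in>B. G b) + (\<Sum>a\<in>A. F a) * pd v (\<Sum>b\<in>B. G b)"
  by (simp add: sum_product pd_sum assms sum.distrib)

lemma pd_mult: "pd v (f * g) = pd v f * g + f * pd v (g::mpoly)"
proof -
  have ef: "f = (\<Sum>m\<in>Poly_Mapping.keys f. Poly_Mapping.single m (Poly_Mapping.lookup f m))"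
    by (rule mpoly_expand)
  have eg: "g = (\<Sum>m\<in>Poly_Mapping.keys g. Poly_Mapping.single m (Poly_Mapping.lookup g m))"
    by (rule mpoly_expand)
  show ?thesis
    using pd_mult_sums[of v "\<lambda>m. Poly_Mapping.single m (Poly_Mapping.lookup f m)" "\<lambda>m. Poly_Mapping.single m (Poly_Mapping.lookup g m)" "Poly_Mapping.keys f" "Poly_Mapping.keys g", OF pd_mult_single]
    by (simp only: ef[symmetric] eg[symmetric])
qed


lemma cst_add: "cst (a + b) = cst a + cst b" by (simp add: cst_def single_add)
lemma cst_mult: "cst (a * b) = cst a * cst b" by (simp add: cst_def mult_single)
lemma cst_0[simp]: "cst 0 = 0" by (simp add: cst_def)
lemma cst_1[simp]: "cst 1 = 1" by (simp add: cst_def)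
lemma cst_uminus: "cst (- a) = - cst a" by (simp add: cst_def single_uminus)
lemma cst_diff: "cst (a - b) = cst a - cst b" by (simp add: cst_def single_diff)
lemma cst_of_nat: "cst (of_nat n) = of_nat n" by (simp add: cst_def)
lemma cst_sum: "cst (\<Sum>i\<in>I. f i) = (\<Sum>i\<in>I. cst (f i))"
  by (induction I rule: infinite_finite_induct) (auto simp: cst_add)

lemma pd_vr: "pd v (vr w) = (if v = w then 1 else 0)"
  by (auto simp: vr_def pd_single lookup_single)

lemma pd_cst[simp]: "pd v (cst c) = 0"
  by (simp add: cst_def pd_single)

lemma pd_cst_mult: "pd v (cst c * f) = cst c * pd v f"
  by (simp add: pd_mult)

lemma pd_uminus: "pd v (- f) = - pd v f"
  by (metis add_eq_0_iff pd_add pd_zero)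

lemma pd_diff: "pd v (f - g) = pd v f - pd v g"
  by (metis add_diff_cancel_right' diff_add_cancel pd_add)

lemma pd_comm_single: "pd u (pd v (Poly_Mapping.single a c)) = pd v (pd u (Poly_Mapping.single a c))"
proof (cases "u = v")
  case False
  have "a - Poly_Mapping.single v 1 - Poly_Mapping.single u 1 = a - Poly_Mapping.single u 1 - Poly_Mapping.single v (1::nat)"
    by (rule poly_mapping_eqI) (simp add: lookup_minus_nat)
  then show ?thesis using False
    by (simp add: pd_single lookup_minus_nat lookup_single mult_ac)
qed simp

lemma pd_comm: "pd u (pd v f) = pd v (pd u f)"
  by (subst (1 2) mpoly_expand) (simp add: pd_sum pd_comm_single)

lemma finite_vars[simp]: "finite (vars f)"
  by (simp add: vars_def)

lemma vars_add: "vars (f + g) \<subseteq> vars f \<union> vars g"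
  unfolding vars_def using keys_add[of f g] by auto

lemma vars_sum: "vars (\<Sum>i\<in>I. f i) \<subseteq> (\<Union>i\<in>I. vars (f i))"
  unfolding vars_def using keys_sum[of f I] by blast

lemma vars_uminus[simp]: "vars (- f) = vars f"
  by (simp add: vars_def)

lemma vars_diff: "vars (f - g) \<subseteq> vars f \<union> vars (g::mpoly)"
  unfolding vars_def using keys_diff[of f g] by auto

lemma vars_mult: "vars (f * g) \<subseteq> vars f \<union> vars (g::mpoly)"
proof
  fix x assume "x \<in> vars (f*g)"
  then obtain m where m: "m \<in> Poly_Mapping.keys (f*g)" "x \<in> Poly_Mapping.keys m" by (auto simp: vars_def)
  then obtain a b where "m = a + b" "a \<in> Poly_Mapping.keys f" "b \<in> Poly_Mapping.keys g"
    using keys_mult[of f g] by blast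
  with m keys_add[of a b] show "x \<in> vars f \<union> vars g" by (auto simp: vars_def)
qed

lemma vars_cst[simp]: "vars (cst c) = {}"
  by (simp add: vars_def cst_def)

lemma vars_vr[simp]: "vars (vr w) = {w}"
  by (simp add: vars_def vr_def)

lemma keys_minus_nat: "Poly_Mapping.keys (a - b) \<subseteq> Poly_Mapping.keys (a::'x \<Rightarrow>\<^sub>0 nat)"
  by (auto simp: in_keys_iff lookup_minus_nat)

lemma keys_pd: "Poly_Mapping.keys (pd v f) \<subseteq> (\<lambda>a. a - Poly_Mapping.single v 1) ` Poly_Mapping.keys f"
proof -
  have "Poly_Mapping.keys (pd v f) \<subseteq> (\<Union>a\<in>Poly_Mapping.keys f. Poly_Mapping.keys (Poly_Mapping.single (a - Poly_Mapping.single v 1)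
                               (Poly_Mapping.lookup f a * of_nat (Poly_Mapping.lookup a v))))"
    unfolding pd_def by (rule keys_sum)
  also have "\<dots> \<subseteq> (\<lambda>a. a - Poly_Mapping.single v 1) ` Poly_Mapping.keys f"
    by auto
  finally show ?thesis .
qed

lemma vars_pd: "vars (pd v f) \<subseteq> vars f"
proof
  fix x assume "x \<in> vars (pd v f)"
  then obtain m where m: "m \<in> Poly_Mapping.keys (pd v f)" "x \<in> Poly_Mapping.keys m" by (auto simp: vars_def)
  from m(1) keys_pd obtain a where "a \<in> Poly_Mapping.keys f" "m = a - Poly_Mapping.single v 1"
    by blast
  with m(2) keys_minus_nat[of a "Poly_Mapping.single v 1"] show "x \<in> vars f" unfolding vars_def by blast
qed

lemma pd_notin: "v \<notin> vars f \<Longrightarrow> pd v f = 0"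
  unfolding pd_def
  by (rule sum.neutral) (auto simp: vars_def in_keys_iff)



definition Yfree :: "mpoly \<Rightarrow> bool" where "Yfree h \<longleftrightarrow> (\<forall>i. Y i \<notin> vars h)"
definition pmax :: "mpoly \<Rightarrow> nat" where "pmax h = Max (insert 0 (Pidx h))"

lemma finite_Pidx[simp]: "finite (Pidx f)"
proof -
  have "Pidx f \<subseteq> P -` vars f" unfolding Pidx_def by auto
  moreover have "finite (P -` vars f)" by (rule finite_vimageI) (auto simp: inj_def)
  ultimately show ?thesis using finite_subset by blast
qed

lemma finite_Yidx[simp]: "finite (Yidx f)"
proof -
  have "Yidx f \<subseteq> Y -` vars f" unfolding Yidx_def by auto
  moreover have "finite (Y -` vars f)" by (rule finite_vimageI) (auto simp: inj_def)
  ultimately show ?thesis using finite_subset by blast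
qed

lemma Pidx_le_pmax: "i \<in> Pidx f \<Longrightarrow> i \<le> pmax f"
  unfolding pmax_def by simp

lemma pd_P_beyond: "pmax f < i \<Longrightarrow> pd (P i) f = 0"
proof (rule pd_notin)
  assume a: "pmax f < i"
  show "P i \<notin> vars f"
  proof
    assume "P i \<in> vars f"
    with a have "i \<in> Pidx f" by (simp add: Pidx_def)
    with a Pidx_le_pmax[of i f] show False by simp
  qed
qed

lemma pd_P_notin: "i \<notin> Pidx f \<Longrightarrow> 1 \<le> i \<Longrightarrow> pd (P i) f = 0"
  by (rule pd_notin) (auto simp: Pidx_def)

lemma pd_Y_notin: "i \<notin> Yidx f \<Longrightarrow> pd (Y i) f = 0"
  by (rule pd_notin) (auto simp: Yidx_def)

lemma Pidx_mono: "vars f \<subseteq> vars g \<Longrightarrow> Pidx f \<subseteq> Pidx g"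
  unfolding Pidx_def by auto

lemma Yidx_mono: "vars f \<subseteq> vars g \<Longrightarrow> Yidx f \<subseteq> Yidx g"
  unfolding Yidx_def by auto

lemma pmax_mono: "vars f \<subseteq> vars g \<Longrightarrow> pmax f \<le> pmax g"
  unfolding pmax_def using Pidx_mono[of f g]
  by (intro Max_mono) auto

lemma Pidx_sub_pmax: "Pidx f \<subseteq> {1..pmax f}"
  using Pidx_le_pmax by (auto simp: Pidx_def)

lemma Yfree_pd_Y: "Yfree h \<Longrightarrow> pd (Y i) h = 0"
  by (simp add: Yfree_def pd_notin)

lemma Yfree_add: "Yfree f \<Longrightarrow> Yfree g \<Longrightarrow> Yfree (f + g)"
  using vars_add unfolding Yfree_def by blast
lemma Yfree_diff: "Yfree f \<Longrightarrow> Yfree g \<Longrightarrow> Yfree (f - g)"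
  using vars_diff unfolding Yfree_def by blast
lemma Yfree_mult: "Yfree f \<Longrightarrow> Yfree g \<Longrightarrow> Yfree (f * g)"
  using vars_mult unfolding Yfree_def by blast
lemma Yfree_sum: "(\<And>i. i \<in> I \<Longrightarrow> Yfree (f i)) \<Longrightarrow> Yfree (\<Sum>i\<in>I. f i)"
  using vars_sum[of f I] unfolding Yfree_def by blast
lemma Yfree_cst[simp]: "Yfree (cst c)"
  by (simp add: Yfree_def)
lemma Yfree_0[simp]: "Yfree 0"
  by (simp add: Yfree_def vars_def)
lemma Yfree_1[simp]: "Yfree 1"
  using Yfree_cst[of 1] by simp
lemma Yfree_of_nat[simp]: "Yfree (of_nat n)"
  using Yfree_cst[of "of_nat n"] by (simp add: cst_of_nat)
lemma Yfree_vrP[simp]: "Yfree (vr (P j))"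
  by (simp add: Yfree_def)
lemma Yfree_pd: "Yfree f \<Longrightarrow> Yfree (pd v f)"
  using vars_pd unfolding Yfree_def by blast
lemma Yfree_uminus: "Yfree f \<Longrightarrow> Yfree (- f)"
  by (simp add: Yfree_def)



abbreviation bt :: K where "bt \<equiv> 1 + bb"

lemma notin_Pidx_cases: "i \<notin> Pidx f \<Longrightarrow> vars g \<subseteq> vars f \<Longrightarrow> i = 0 \<or> pd (P i) g = 0"
  by (cases "i = 0") (auto intro!: pd_notin simp: Pidx_def)

lemma zeroP:
  assumes "i \<notin> Pidx f" "vars g \<subseteq> vars f" "i = 0 \<Longrightarrow> c = 0"
  shows "c * X * pd (P i) g = (0::mpoly)"
  using notin_Pidx_cases[OF assms(1,2)] assms(3) by auto

lemma zeroY: "k \<notin> Yidx f \<Longrightarrow> X * pd (Y k) f = 0"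
  by (simp add: pd_Y_notin)

definition ThetaS :: "nat set \<Rightarrow> mpoly \<Rightarrow> mpoly" where
  "ThetaS S f = (\<Sum>i\<in>{i\<in>S. 1 \<le> i}. vr (P i) * pd (Y i) f)"

lemma ThetaY_S: "finite S \<Longrightarrow> Yidx f \<subseteq> S \<Longrightarrow> ThetaY f = ThetaS S f"
  unfolding ThetaY_def ThetaS_def
  by (rule sum.mono_neutral_left) (auto, metis mult_zero_right pd_Y_notin)

definition YplusS :: "nat set \<Rightarrow> mpoly \<Rightarrow> mpoly" where
  "YplusS S f = (\<Sum>i\<in>S. vr (Y (i+1)) * pd (Y i) f)"

lemma Yplus_S: "finite S \<Longrightarrow> Yidx f \<subseteq> S \<Longrightarrow> Yplus f = YplusS S f"
  unfolding Yplus_def YplusS_def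
  by (rule sum.mono_neutral_left) (auto simp: zeroY)

definition LamS :: "nat set \<Rightarrow> nat set \<Rightarrow> mpoly \<Rightarrow> mpoly" where
  "LamS SP SY f =
     cst (1 + bb) * (\<Sum>i\<in>SP. \<Sum>k\<in>SY.
         cst (of_nat i) * vr (Y (i+k)) * pd (P i) (pd (Y k) f))
   + (\<Sum>n\<in>SY. \<Sum>j\<in>{1..n}. vr (Y (n-j)) * vr (P j) * pd (Y n) f)
   + cst bb * (\<Sum>i\<in>SY. cst (of_nat i) * vr (Y i) * pd (Y i) f)"

lemma LambdaY_S:
  assumes "finite SP" "finite SY" "Pidx f \<subseteq> SP" "Yidx f \<subseteq> SY"
  shows "LambdaY f = LamS SP SY f"
proof -
  have 1: "(\<Sum>i\<in>Pidx f. \<Sum>k\<in>Yidx f. cst (of_nat i) * vr (Y (i+k)) * pd (P i) (pd (Y k) f))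
      = (\<Sum>i\<in>SP. \<Sum>k\<in>SY. cst (of_nat i) * vr (Y (i+k)) * pd (P i) (pd (Y k) f))"
  proof -
    have "(\<Sum>i\<in>Pidx f. \<Sum>k\<in>Yidx f. cst (of_nat i) * vr (Y (i+k)) * pd (P i) (pd (Y k) f))
      = (\<Sum>i\<in>Pidx f. \<Sum>k\<in>SY. cst (of_nat i) * vr (Y (i+k)) * pd (P i) (pd (Y k) f))"
      by (intro sum.cong refl sum.mono_neutral_left) (use assms in \<open>auto simp: pd_Y_notin\<close>)
    also have "\<dots> = (\<Sum>i\<in>SP. \<Sum>k\<in>SY. cst (of_nat i) * vr (Y (i+k)) * pd (P i) (pd (Y k) f))"
      by (rule sum.mono_neutral_left)
         (use assms in \<open>auto intro!: sum.neutral zeroP[of _ f] vars_pd\<close>)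
    finally show ?thesis .
  qed
  have 2: "(\<Sum>n\<in>Yidx f. \<Sum>j\<in>{1..n}. vr (Y (n-j)) * vr (P j) * pd (Y n) f)
         = (\<Sum>n\<in>SY. \<Sum>j\<in>{1..n}. vr (Y (n-j)) * vr (P j) * pd (Y n) f)"
    by (rule sum.mono_neutral_left) (use assms in \<open>auto simp: pd_Y_notin\<close>)
  have 3: "(\<Sum>i\<in>Yidx f. cst (of_nat i) * vr (Y i) * pd (Y i) f)
         = (\<Sum>i\<in>SY. cst (of_nat i) * vr (Y i) * pd (Y i) f)"
    by (rule sum.mono_neutral_left) (use assms in \<open>auto simp: pd_Y_notin\<close>)
  show ?thesis unfolding LambdaY_def LamS_def 1 2 3 ..
qed

definition DS :: "nat set \<Rightarrow> mpoly \<Rightarrow> mpoly" where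
  "DS S f = cst (inverse 2) *
    ( cst (1 + bb) * (\<Sum>i\<in>S. \<Sum>j\<in>S.
         cst (of_nat (i*j)) * vr (P (i+j)) * pd (P i) (pd (P j) f))
    + (\<Sum>n\<in>S. \<Sum>i\<in>{1..<n}. cst (of_nat n) * vr (P i) * vr (P (n-i)) * pd (P n) f)
    + cst bb * (\<Sum>i\<in>S. cst (of_nat (i*(i-1))) * vr (P i) * pd (P i) f))"

lemma Dalpha_S:
  assumes "finite S" "Pidx f \<subseteq> S"
  shows "Dalpha f = DS S f"
proof -
  have 1: "(\<Sum>i\<in>Pidx f. \<Sum>j\<in>Pidx f. cst (of_nat (i*j)) * vr (P (i+j)) * pd (P i) (pd (P j) f))
      = (\<Sum>i\<in>S. \<Sum>j\<in>S. cst (of_nat (i*j)) * vr (P (i+j)) * pd (P i) (pd (P j) f))"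
  proof -
    have "(\<Sum>i\<in>Pidx f. \<Sum>j\<in>Pidx f. cst (of_nat (i*j)) * vr (P (i+j)) * pd (P i) (pd (P j) f))
      = (\<Sum>i\<in>Pidx f. \<Sum>j\<in>S. cst (of_nat (i*j)) * vr (P (i+j)) * pd (P i) (pd (P j) f))"
    proof (rule sum.cong[OF refl], rule sum.mono_neutral_left)
      fix i show "\<forall>j\<in>S - Pidx f. cst (of_nat (i*j)) * vr (P (i+j)) * pd (P i) (pd (P j) f) = 0"
        by (auto simp: pd_comm[of "P i"] intro!: zeroP[of _ f] vars_pd)
    qed (use assms in auto)
    also have "\<dots> = (\<Sum>i\<in>S. \<Sum>j\<in>S. cst (of_nat (i*j)) * vr (P (i+j)) * pd (P i) (pd (P j) f))"
      by (rule sum.mono_neutral_left)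
         (use assms in \<open>auto intro!: sum.neutral zeroP[of _ f] vars_pd\<close>)
    finally show ?thesis .
  qed
  have 2: "(\<Sum>n\<in>Pidx f. \<Sum>i\<in>{1..<n}. cst (of_nat n) * vr (P i) * vr (P (n-i)) * pd (P n) f)
         = (\<Sum>n\<in>S. \<Sum>i\<in>{1..<n}. cst (of_nat n) * vr (P i) * vr (P (n-i)) * pd (P n) f)"
    by (rule sum.mono_neutral_left) (use assms in \<open>auto intro!: sum.neutral zeroP[of _ f]\<close>)
  have 3: "(\<Sum>i\<in>Pidx f. cst (of_nat (i*(i-1))) * vr (P i) * pd (P i) f)
         = (\<Sum>i\<in>S. cst (of_nat (i*(i-1))) * vr (P i) * pd (P i) f)"
    by (rule sum.mono_neutral_left) (use assms in \<open>auto intro!: zeroP[of _ f]\<close>)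
  show ?thesis unfolding Dalpha_def DS_def 1 2 3 ..
qed



lemma ThetaS_add: "ThetaS S (f + g) = ThetaS S f + ThetaS S g"
  unfolding ThetaS_def by (simp add: pd_add distrib_left sum.distrib)
lemma YplusS_add: "YplusS S (f + g) = YplusS S f + YplusS S g"
  unfolding YplusS_def by (simp add: pd_add distrib_left sum.distrib)
lemma LamS_add: "LamS SP SY (f + g) = LamS SP SY f + LamS SP SY g"
  unfolding LamS_def by (simp add: pd_add distrib_left sum.distrib algebra_simps)
lemma DS_add: "DS S (f + g) = DS S f + DS S g"
  unfolding DS_def by (simp add: pd_add distrib_left sum.distrib algebra_simps)
lemma DS_cst: "DS S (cst c * f) = cst c * DS S f"
  unfolding DS_def pd_cst_mult by (simp add: sum_distrib_left algebra_simps)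

lemma ThetaY_add: "ThetaY (f + g) = ThetaY f + ThetaY g"
proof -
  let ?S = "Yidx f \<union> Yidx g \<union> Yidx (f+g)"
  show ?thesis by (subst (1 2 3) ThetaY_S[of ?S]) (auto simp: ThetaS_add)
qed

lemma Yplus_add: "Yplus (f + g) = Yplus f + Yplus g"
proof -
  let ?S = "Yidx f \<union> Yidx g \<union> Yidx (f+g)"
  show ?thesis by (subst (1 2 3) Yplus_S[of ?S]) (auto simp: YplusS_add)
qed

lemma LambdaY_add: "LambdaY (f + g) = LambdaY f + LambdaY g"
proof -
  let ?SP = "Pidx f \<union> Pidx g \<union> Pidx (f+g)"
  let ?SY = "Yidx f \<union> Yidx g \<union> Yidx (f+g)"
  show ?thesis by (subst (1 2 3) LambdaY_S[of ?SP ?SY]) (auto simp: LamS_add)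
qed

lemma Dalpha_add: "Dalpha (f + g) = Dalpha f + Dalpha g"
proof -
  let ?S = "Pidx f \<union> Pidx g \<union> Pidx (f+g)"
  show ?thesis by (subst (1 2 3) Dalpha_S[of ?S]) (auto simp: DS_add)
qed

lemma Dalpha_cst: "Dalpha (cst c * f) = cst c * Dalpha f"
proof -
  let ?S = "Pidx f \<union> Pidx (cst c * f)"
  show ?thesis by (subst (1 2) Dalpha_S[of ?S]) (auto simp: DS_cst)
qed

lemma ThetaY_0[simp]: "ThetaY 0 = 0" by (metis ThetaY_add add_cancel_right_right)
lemma Yplus_0[simp]: "Yplus 0 = 0" by (metis Yplus_add add_cancel_right_right)
lemma LambdaY_0[simp]: "LambdaY 0 = 0" by (metis LambdaY_add add_cancel_right_right)
lemma Dalpha_0[simp]: "Dalpha 0 = 0" by (metis Dalpha_add add_cancel_right_right)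

lemma Dalpha_diff: "Dalpha (f - g) = Dalpha f - Dalpha g"
  by (metis Dalpha_add diff_add_cancel eq_diff_eq)

lemma ThetaY_sum: "ThetaY (\<Sum>i\<in>I. f i) = (\<Sum>i\<in>I. ThetaY (f i))"
  by (induction I rule: infinite_finite_induct) (auto simp: ThetaY_add)
lemma Yplus_sum: "Yplus (\<Sum>i\<in>I. f i) = (\<Sum>i\<in>I. Yplus (f i))"
  by (induction I rule: infinite_finite_induct) (auto simp: Yplus_add)
lemma LambdaY_sum: "LambdaY (\<Sum>i\<in>I. f i) = (\<Sum>i\<in>I. LambdaY (f i))"
  by (induction I rule: infinite_finite_induct) (auto simp: LambdaY_add)
lemma Dalpha_sum: "Dalpha (\<Sum>i\<in>I. f i) = (\<Sum>i\<in>I. Dalpha (f i))"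
  by (induction I rule: infinite_finite_induct) (auto simp: Dalpha_add)

lemma Yfree_DS: "Yfree f \<Longrightarrow> Yfree (DS S f)"
  unfolding DS_def
  by (intro Yfree_add Yfree_mult Yfree_sum Yfree_pd Yfree_cst Yfree_vrP; assumption?)+

lemma Yfree_Dalpha: "Yfree f \<Longrightarrow> Yfree (Dalpha f)"
  using Dalpha_S[of "Pidx f" f] Yfree_DS by simp



abbreviation y :: "nat \<Rightarrow> mpoly" where "y k \<equiv> vr (Y k)"
abbreviation p :: "nat \<Rightarrow> mpoly" where "p k \<equiv> vr (P k)"

lemma sum_split3:
  assumes "k \<le> (B::nat)"
  shows "(\<Sum>m\<le>B. F m) = (\<Sum>m<k. F m) + F k + (\<Sum>m\<in>{k<..B}. F m)"
proof -
  have e: "{..B} = insert k ({..<k} \<union> {k<..B})" using assms by auto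
  have "sum F ({..<k} \<union> {k<..B}) = sum F {..<k} + sum F {k<..B}"
    by (rule sum.union_disjoint) auto
  then show ?thesis unfolding e by (simp add: algebra_simps)
qed

lemma sum_lessThan_rev: "(\<Sum>m<(k::nat). F m) = (\<Sum>j\<in>{1..k}. F (k - j))"
  by (rule sum.reindex_bij_witness[of _ "\<lambda>j. k - j" "\<lambda>m. k - m"]) (auto simp: diff_diff_cancel)

lemma sum_gt_shift: "(\<Sum>m\<in>{(k::nat)<..B}. F m) = (\<Sum>i\<in>{1..B-k}. F (i + k))"
  by (rule sum.reindex_bij_witness[of _ "\<lambda>i. i + k" "\<lambda>m. m - k"]) (auto simp: le_add_diff_inverse2)

lemma sum_range_ext:
  assumes "\<And>i. C < i \<Longrightarrow> F i = 0" "C \<le> A" "C \<le> A'"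
  shows "(\<Sum>i\<in>{a..A}. F i) = (\<Sum>i\<in>{a..A'::nat}. F i)"
proof -
  have "(\<Sum>i\<in>{a..A}. F i) = (\<Sum>i\<in>{a..C}. F i)"
    by (rule sum.mono_neutral_right) (use assms in auto)
  also have "\<dots> = (\<Sum>i\<in>{a..A'}. F i)"
    by (rule sum.mono_neutral_left) (use assms in auto)
  finally show ?thesis .
qed

lemma sum_atMost_ext:
  assumes "\<And>i. C < i \<Longrightarrow> F i = 0" "C \<le> A" "C \<le> A'"
  shows "(\<Sum>i\<le>A. F i) = (\<Sum>i\<le>(A'::nat). F i)"
  using sum_range_ext[of C F A A' 0] assms by (simp add: atLeast0AtMost)

lemma pdY_gen: "Yfree h \<Longrightarrow> pd (Y k') (y k * h) = (if k' = k then h else 0)"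
  by (simp add: pd_mult pd_vr Yfree_pd_Y)

lemma pdP_gen: "Yfree h \<Longrightarrow> pd (P i) (y k * h) = y k * pd (P i) h"
  by (simp add: pd_mult pd_vr)

lemma vars_gen: "vars (vr v * h) \<subseteq> insert v (vars h)"
  using vars_mult[of "vr v" h] by simp

lemma Yidx_gen: "Yfree h \<Longrightarrow> Yidx (y k * h) \<subseteq> {k}"
  using vars_gen[of "Y k" h] unfolding Yidx_def Yfree_def by auto

lemma Pidx_gen: "Pidx (y k * h) \<subseteq> Pidx h"
  using vars_gen[of "Y k" h] unfolding Pidx_def by auto

lemma pmax_le: "(\<And>i. i \<in> Pidx f \<Longrightarrow> i \<le> C) \<Longrightarrow> pmax f \<le> C"
  unfolding pmax_def by (subst Max_le_iff) auto

lemma pmax_gen: "pmax (y k * h) \<le> pmax h"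
  by (meson Pidx_gen Pidx_le_pmax pmax_le subsetD)

lemma Phi_gen: "Yfree h \<Longrightarrow> ThetaY (Yplus (y k * h)) = p (k+1) * h"
proof -
  assume h: "Yfree h"
  have "Yplus (y k * h) = YplusS {k} (y k * h)"
    by (rule Yplus_S) (use Yidx_gen[OF h] in auto)
  also have "\<dots> = y (k+1) * h" by (simp add: YplusS_def pdY_gen h)
  finally have 1: "Yplus (y k * h) = y (k+1) * h" .
  have "ThetaY (y (k+1) * h) = ThetaS {k+1} (y (k+1) * h)"
    by (rule ThetaY_S) (use Yidx_gen[OF h] in auto)
  also have "\<dots> = p (k+1) * h"
  proof -
    have "{i\<in>{k+1}. 1 \<le> i} = {k+1}" by auto
    then show ?thesis by (simp add: ThetaS_def pdY_gen h)
  qed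
  finally show ?thesis using 1 by simp
qed

definition Lt :: "nat \<Rightarrow> nat \<Rightarrow> mpoly \<Rightarrow> mpoly" where
  "Lt k m h = (if k < m then cst (bt * of_nat (m-k)) * pd (P (m-k)) h
               else if m < k then p (k-m) * h else cst (bb * of_nat k) * h)"

lemma Lt_beyond: "k + pmax h < m \<Longrightarrow> Lt k m h = 0"
  by (simp add: Lt_def pd_P_beyond)

lemma Lam_gen:
  assumes h: "Yfree h" and B: "k + pmax h \<le> B"
  shows "LambdaY (y k * h) = (\<Sum>m\<le>B. y m * Lt k m h)"
proof -
  have "LambdaY (y k * h) = LamS {1..pmax h} {k} (y k * h)"
    by (rule LambdaY_S) (use Yidx_gen[OF h] Pidx_gen[of k h] Pidx_sub_pmax[of h] in auto)
  also have "\<dots> = cst bt * (\<Sum>i\<in>{1..pmax h}. cst (of_nat i) * y (i+k) * pd (P i) h)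
      + (\<Sum>j\<in>{1..k}. y (k-j) * p j * h) + cst bb * (cst (of_nat k) * y k * h)"
    by (simp add: LamS_def pdY_gen pdP_gen h pd_mult pd_vr Yfree_pd_Y mult_ac)
  also have "(\<Sum>i\<in>{1..pmax h}. cst (of_nat i) * y (i+k) * pd (P i) h)
           = (\<Sum>i\<in>{1..B-k}. cst (of_nat i) * y (i+k) * pd (P i) h)"
    by (rule sum_range_ext[of "pmax h"]) (use B in \<open>auto simp: pd_P_beyond\<close>)
  also have "cst bt * \<dots> = (\<Sum>m\<in>{k<..B}. y m * Lt k m h)"
    by (simp add: sum_gt_shift sum_distrib_left Lt_def cst_mult mult_ac)
  also have "(\<Sum>j\<in>{1..k}. y (k-j) * p j * h) = (\<Sum>m<k. y m * Lt k m h)"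
    by (simp add: sum_lessThan_rev Lt_def mult_ac)
  also have "cst bb * (cst (of_nat k) * y k * h) = y k * Lt k k h"
    by (simp add: Lt_def cst_mult mult_ac)
  finally show ?thesis
    using sum_split3[of k B "\<lambda>m. y m * Lt k m h"] B by (simp add: algebra_simps)
qed



definition Mt :: "nat \<Rightarrow> nat \<Rightarrow> mpoly \<Rightarrow> mpoly" where
  "Mt k m h = (if k < m then cst (bt * of_nat k * of_nat (m-k)) * pd (P (m-k)) h
               else if m < k then cst (of_nat m) * p (k-m) * h
               else Dalpha h + cst (bb * of_nat k * of_nat (k-1) * inverse 2) * h)"

lemma Mt_beyond: "k + pmax h < m \<Longrightarrow> Mt k m h = 0"
  by (simp add: Mt_def pd_P_beyond)

lemma Lt_add: "Lt k m (f + g) = Lt k m f + Lt k m g"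
  by (simp add: Lt_def pd_add algebra_simps)
lemma Mt_add: "Mt k m (f + g) = Mt k m f + Mt k m g"
  by (simp add: Mt_def pd_add Dalpha_add algebra_simps)
lemma Lt_0[simp]: "Lt k m 0 = 0"
  by (simp add: Lt_def)
lemma Mt_0[simp]: "Mt k m 0 = 0"
  by (simp add: Mt_def)

lemma Yfree_Lt: "Yfree h \<Longrightarrow> Yfree (Lt k m h)"
  by (simp add: Lt_def Yfree_mult Yfree_pd)
lemma Yfree_Mt: "Yfree h \<Longrightarrow> Yfree (Mt k m h)"
  by (simp add: Mt_def Yfree_mult Yfree_pd Yfree_add Yfree_Dalpha)

lemma Pidx_add: "Pidx (f + g) \<subseteq> Pidx f \<union> Pidx g"
  using vars_add[of f g] unfolding Pidx_def by auto
lemma Pidx_mult: "Pidx (f * g) \<subseteq> Pidx f \<union> Pidx g"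
  using vars_mult[of f g] unfolding Pidx_def by auto
lemma Pidx_sum: "Pidx (\<Sum>i\<in>I. f i) \<subseteq> (\<Union>i\<in>I. Pidx (f i))"
  using vars_sum[of f I] unfolding Pidx_def by auto

lemma pmax_add: "pmax (f + g) \<le> max (pmax f) (pmax g)"
  by (rule pmax_le) (use Pidx_add Pidx_le_pmax in fastforce)
lemma pmax_mult: "pmax (f * g) \<le> max (pmax f) (pmax g)"
  by (rule pmax_le) (use Pidx_mult Pidx_le_pmax in fastforce)
lemma pmax_sum: "(\<And>i. i \<in> I \<Longrightarrow> pmax (f i) \<le> C) \<Longrightarrow> pmax (\<Sum>i\<in>I. f i) \<le> C"
  by (rule pmax_le) (use Pidx_sum Pidx_le_pmax in fastforce)
lemma pmax_cst[simp]: "pmax (cst c) = 0"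
  by (simp add: pmax_def Pidx_def)
lemma pmax_vrP: "pmax (p j) \<le> j"
  by (rule pmax_le) (simp add: Pidx_def)
lemma pmax_vrY[simp]: "pmax (y j) = 0"
  by (simp add: pmax_def Pidx_def)
lemma pmax_pd: "pmax (pd v f) \<le> pmax f"
  by (rule pmax_mono[OF vars_pd])

lemma pmax_add_le: "pmax f \<le> C \<Longrightarrow> pmax g \<le> C \<Longrightarrow> pmax (f + g) \<le> C"
  using pmax_add[of f g] by linarith
lemma pmax_mult_le: "pmax f \<le> C \<Longrightarrow> pmax g \<le> C \<Longrightarrow> pmax (f * g) \<le> C"
  using pmax_mult[of f g] by linarith
lemma pmax_vrP_le: "j \<le> C \<Longrightarrow> pmax (p j) \<le> C"
  using pmax_vrP[of j] by linarith
lemma pmax_pd_le: "pmax f \<le> C \<Longrightarrow> pmax (pd v f) \<le> C"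
  using pmax_pd[of v f] by linarith
lemma pmax_cst_le: "pmax (cst c) \<le> C"
  by simp

lemma pmax_DS: "pmax f \<le> N \<Longrightarrow> S \<subseteq> {..N} \<Longrightarrow> pmax (DS S f) \<le> 2 * N"
  unfolding DS_def
  apply (intro pmax_add_le pmax_mult_le pmax_sum pmax_cst_le pmax_vrP_le pmax_pd_le)
  apply (auto simp: subset_iff)
  apply (metis add_le_mono mult_2)
  done

lemma pmax_Dalpha: "pmax (Dalpha f) \<le> 2 * pmax f"
proof -
  have "Dalpha f = DS {1..pmax f} f" by (rule Dalpha_S) (simp, rule Pidx_sub_pmax)
  then show ?thesis using pmax_DS[of f "pmax f" "{1..pmax f}"] by auto
qed

lemma pmax_Lt: "pmax (Lt k m h) \<le> k + pmax h"
  unfolding Lt_def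
  by (auto intro!: pmax_mult_le pmax_vrP_le pmax_pd_le pmax_cst_le)

lemma pmax_Mt: "pmax (Mt k m h) \<le> k + 2 * pmax h"
  unfolding Mt_def using pmax_Dalpha[of h]
  by (auto intro!: pmax_add_le pmax_mult_le pmax_vrP_le pmax_pd_le pmax_cst_le)

subsection \<open>The operator M\<close>

definition Mop :: "mpoly \<Rightarrow> mpoly" where
  "Mop G = (\<Sum>k\<in>Yidx G. \<Sum>m\<le>Max (insert 0 (Yidx G)) + pmax G. y m * Mt k m (pd (Y k) G))"

lemma Mop_S:
  assumes "finite S" "Yidx G \<subseteq> S" "\<And>k. k \<in> S \<Longrightarrow> k + pmax G \<le> B"
  shows "Mop G = (\<Sum>k\<in>S. \<Sum>m\<le>B. y m * Mt k m (pd (Y k) G))"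
proof -
  have "Mop G = (\<Sum>k\<in>Yidx G. \<Sum>m\<le>B. y m * Mt k m (pd (Y k) G))"
    unfolding Mop_def
  proof (rule sum.cong[OF refl])
    fix k assume k: "k \<in> Yidx G"
    have kle: "k \<le> Max (insert 0 (Yidx G))" using k by simp
    show "(\<Sum>m\<le>Max (insert 0 (Yidx G)) + pmax G. y m * Mt k m (pd (Y k) G))
        = (\<Sum>m\<le>B. y m * Mt k m (pd (Y k) G))"
    proof (rule sum_atMost_ext[of "k + pmax G"])
      fix i assume "k + pmax G < i"
      then have "k + pmax (pd (Y k) G) < i" using pmax_pd[of "Y k" G] by linarith
      then show "y i * Mt k i (pd (Y k) G) = 0" by (simp add: Mt_beyond)
    qed (use kle k assms in auto)
  qed
  also have "\<dots> = (\<Sum>k\<in>S. \<Sum>m\<le>B. y m * Mt k m (pd (Y k) G))"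
    by (rule sum.mono_neutral_left) (use assms in \<open>auto simp: pd_Y_notin\<close>)
  finally show ?thesis .
qed

lemma Mop_add: "Mop (F + G) = Mop F + Mop G"
proof -
  let ?S = "Yidx F \<union> Yidx G \<union> Yidx (F+G)"
  let ?B = "Max (insert 0 ?S) + pmax F + pmax G + pmax (F+G)"
  have le: "k \<in> ?S \<Longrightarrow> k \<le> Max (insert 0 ?S)" for k by simp
  have b1: "k \<in> ?S \<Longrightarrow> k + pmax F \<le> ?B" for k using le[of k] by linarith
  have b2: "k \<in> ?S \<Longrightarrow> k + pmax G \<le> ?B" for k using le[of k] by linarith
  have b3: "k \<in> ?S \<Longrightarrow> k + pmax (F+G) \<le> ?B" for k using le[of k] by linarith
  have "Mop (F+G) = (\<Sum>k\<in>?S. \<Sum>m\<le>?B. y m * Mt k m (pd (Y k) (F+G)))"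
    apply (rule Mop_S) apply simp apply blast by (rule b3)
  moreover have "Mop F = (\<Sum>k\<in>?S. \<Sum>m\<le>?B. y m * Mt k m (pd (Y k) F))"
    apply (rule Mop_S) apply simp apply blast by (rule b1)
  moreover have "Mop G = (\<Sum>k\<in>?S. \<Sum>m\<le>?B. y m * Mt k m (pd (Y k) G))"
    apply (rule Mop_S) apply simp apply blast by (rule b2)
  ultimately show ?thesis
    by (simp add: pd_add Mt_add distrib_left sum.distrib)
qed

lemma Mop_0[simp]: "Mop 0 = 0" by (metis Mop_add add_cancel_right_right)

lemma Mop_gen:
  assumes h: "Yfree h" and B: "k + pmax h \<le> B"
  shows "Mop (y k * h) = (\<Sum>m\<le>B. y m * Mt k m h)"
proof -
  have "Mop (y k * h) = (\<Sum>k'\<in>{k}. \<Sum>m\<le>B. y m * Mt k' m (pd (Y k') (y k * h)))"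
    by (rule Mop_S) (use Yidx_gen[OF h] pmax_gen[of k h] B in auto)
  then show ?thesis by (simp add: pdY_gen h)
qed

inductive ylin :: "mpoly \<Rightarrow> bool" where
  ylin_0: "ylin 0"
| ylin_gen: "Yfree h \<Longrightarrow> ylin (y k * h)"
| ylin_add: "ylin a \<Longrightarrow> ylin b \<Longrightarrow> ylin (a + b)"

lemma ylin_sum: "(\<And>i. i \<in> I \<Longrightarrow> ylin (f i)) \<Longrightarrow> ylin (\<Sum>i\<in>I. f i)"
  by (induction I rule: infinite_finite_induct) (auto intro: ylin.intros)

lemma op_sum:
  assumes "\<And>a b. Op (a + b) = Op a + Op b" "Op 0 = (0::mpoly)"
  shows "Op (\<Sum>i\<in>I. f i) = (\<Sum>i\<in>I. Op (f i))"
  by (induction I rule: infinite_finite_induct) (auto simp: assms)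

lemma compose:
  assumes add: "\<And>a b. Op (a + b) = Op a + Op b" "Op 0 = 0"
    and gen: "\<And>l g B. Yfree g \<Longrightarrow> l + pmax g \<le> B \<Longrightarrow> Op (y l * g) = (\<Sum>m\<le>B. y m * T l m g)"
    and Yf: "\<And>l. Yfree (g l)" and bnd: "\<And>l. l \<le> K \<Longrightarrow> l + pmax (g l) \<le> B"
  shows "Op (\<Sum>l\<le>K. y l * g l) = (\<Sum>m\<le>B. y m * (\<Sum>l\<le>K. T l m (g l)))"
proof -
  have "Op (\<Sum>l\<le>K. y l * g l) = (\<Sum>l\<le>K. Op (y l * g l))"
    by (rule op_sum[OF add])
  also have "\<dots> = (\<Sum>l\<le>K. \<Sum>m\<le>B. y m * T l m (g l))"
    by (rule sum.cong[OF refl]) (simp add: gen Yf bnd)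
  also have "\<dots> = (\<Sum>m\<le>B. y m * (\<Sum>l\<le>K. T l m (g l)))"
    by (subst sum.swap) (simp add: sum_distrib_left)
  finally show ?thesis .
qed

lemma ylin_Lam: "ylin G \<Longrightarrow> ylin (LambdaY G)"
proof (induction rule: ylin.induct)
  case (ylin_gen h k)
  then show ?case
    by (simp add: Lam_gen[OF ylin_gen order.refl] ylin_sum ylin.ylin_gen Yfree_Lt mult.assoc)
qed (auto simp: LambdaY_add intro: ylin.intros)

lemma ylin_Mop: "ylin G \<Longrightarrow> ylin (Mop G)"
proof (induction rule: ylin.induct)
  case (ylin_gen h k)
  then show ?case
    by (simp add: Mop_gen[OF ylin_gen order.refl] ylin_sum ylin.ylin_gen Yfree_Mt)
qed (auto simp: Mop_add intro: ylin.intros)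



definition D1 :: "nat set \<Rightarrow> mpoly \<Rightarrow> mpoly" where
  "D1 S f = (\<Sum>i\<in>S. \<Sum>j\<in>S. cst (of_nat (i*j)) * p (i+j) * pd (P i) (pd (P j) f))"
definition D2 :: "nat set \<Rightarrow> mpoly \<Rightarrow> mpoly" where
  "D2 S f = (\<Sum>n\<in>S. \<Sum>i\<in>{1..<n}. cst (of_nat n) * p i * p (n-i) * pd (P n) f)"
definition D3 :: "nat set \<Rightarrow> mpoly \<Rightarrow> mpoly" where
  "D3 S f = (\<Sum>i\<in>S. cst (of_nat (i*(i-1))) * p i * pd (P i) f)"

lemma DS_split: "DS S f = cst (inverse 2) * (cst bt * D1 S f + D2 S f + cst bb * D3 S f)"
  unfolding DS_def D1_def D2_def D3_def ..

lemma if_mult0: "(if b then x else 0) * z = (if b then x * z else (0::mpoly))" by simp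
lemma mult_if0: "z * (if b then x else 0) = (if b then z * x else (0::mpoly))" by simp

lemma sum_if_const: "(\<Sum>i\<in>A. if b then f i else 0) = (if b then (\<Sum>i\<in>A. f i) else (0::mpoly))"
  by simp

lemma pdP_p: "pd (P i) (p j * h) = p j * pd (P i) h + (if i = j then h else 0)"
  by (simp add: pd_mult pd_vr)

lemma pd_p_other: "v \<noteq> P j \<Longrightarrow> pd v (p j * h) = p j * pd v h"
  by (simp add: pd_mult pd_vr)

subsection \<open>Commutator with multiplication by p_j\<close>

lemma D1_p:
  assumes "finite S" "j \<in> S"
  shows "D1 S (p j * h) = p j * D1 S h + 2 * (\<Sum>i\<in>S. cst (of_nat (i*j)) * p (i+j) * pd (P i) h)"
proof -
  have e: "pd (P i) (pd (P i') (p j * h)) = p j * pd (P i) (pd (P i') h)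
      + (if i' = j then pd (P i) h else 0) + (if i = j then pd (P i') h else 0)" for i i'
    by (simp add: pdP_p pd_add)
  have "D1 S (p j * h) = (\<Sum>i\<in>S. \<Sum>i'\<in>S. p j * (cst (of_nat (i*i')) * p (i+i') * pd (P i) (pd (P i') h))
     + (if i' = j then cst (of_nat (i*i')) * p (i+i') * pd (P i) h else 0)
     + (if i = j then cst (of_nat (i*i')) * p (i+i') * pd (P i') h else 0))"
    unfolding D1_def e by (intro sum.cong refl) (simp add: algebra_simps)
  also have "\<dots> = (\<Sum>i\<in>S. \<Sum>i'\<in>S. p j * (cst (of_nat (i*i')) * p (i+i') * pd (P i) (pd (P i') h)))
     + (\<Sum>i\<in>S. \<Sum>i'\<in>S. if i' = j then cst (of_nat (i*i')) * p (i+i') * pd (P i) h else 0)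
     + (\<Sum>i\<in>S. \<Sum>i'\<in>S. if i = j then cst (of_nat (i*i')) * p (i+i') * pd (P i') h else 0)"
    by (simp only: sum.distrib)
  finally have s0: "D1 S (p j * h) = (\<Sum>i\<in>S. \<Sum>i'\<in>S. p j * (cst (of_nat (i*i')) * p (i+i') * pd (P i) (pd (P i') h)))
     + (\<Sum>i\<in>S. \<Sum>i'\<in>S. if i' = j then cst (of_nat (i*i')) * p (i+i') * pd (P i) h else 0)
     + (\<Sum>i\<in>S. \<Sum>i'\<in>S. if i = j then cst (of_nat (i*i')) * p (i+i') * pd (P i') h else 0)" .
  have s1: "(\<Sum>i\<in>S. \<Sum>i'\<in>S. p j * (cst (of_nat (i*i')) * p (i+i') * pd (P i) (pd (P i') h))) = p j * D1 S h"
    by (simp add: D1_def sum_distrib_left)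
  have s2: "(\<Sum>i\<in>S. \<Sum>i'\<in>S. if i' = j then cst (of_nat (i*i')) * p (i+i') * pd (P i) h else 0)
      = (\<Sum>i\<in>S. cst (of_nat (i*j)) * p (i+j) * pd (P i) h)"
    using assms by simp
  have s3: "(\<Sum>i\<in>S. \<Sum>i'\<in>S. if i = j then cst (of_nat (i*i')) * p (i+i') * pd (P i') h else 0)
      = (\<Sum>i\<in>S. cst (of_nat (i*j)) * p (i+j) * pd (P i) h)"
    using assms by (subst sum.swap) (simp add: mult.commute add.commute)
  show ?thesis by (simp only: s0 s1 s2 s3 mult_2 add.assoc)
qed

lemma D2_p:
  assumes "finite S" "j \<in> S"
  shows "D2 S (p j * h) = p j * D2 S h + cst (of_nat j) * (\<Sum>i\<in>{1..<j}. p i * p (j-i)) * h"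
proof -
  have "D2 S (p j * h) = (\<Sum>n\<in>S. (\<Sum>i\<in>{1..<n}. p j * (cst (of_nat n) * p i * p (n-i) * pd (P n) h))
     + (if n = j then (\<Sum>i\<in>{1..<n}. cst (of_nat n) * p i * p (n-i) * h) else 0))"
    unfolding D2_def pdP_p
    by (intro sum.cong refl) (simp add: algebra_simps sum.distrib)
  also have "\<dots> = (\<Sum>n\<in>S. \<Sum>i\<in>{1..<n}. p j * (cst (of_nat n) * p i * p (n-i) * pd (P n) h))
     + (\<Sum>n\<in>S. if n = j then (\<Sum>i\<in>{1..<n}. cst (of_nat n) * p i * p (n-i) * h) else 0)"
    by (simp only: sum.distrib)
  finally have s0: "D2 S (p j * h) = (\<Sum>n\<in>S. \<Sum>i\<in>{1..<n}. p j * (cst (of_nat n) * p i * p (n-i) * pd (P n) h))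
     + (\<Sum>n\<in>S. if n = j then (\<Sum>i\<in>{1..<n}. cst (of_nat n) * p i * p (n-i) * h) else 0)" .
  have s1: "(\<Sum>n\<in>S. \<Sum>i\<in>{1..<n}. p j * (cst (of_nat n) * p i * p (n-i) * pd (P n) h)) = p j * D2 S h"
    by (simp add: D2_def sum_distrib_left)
  have s2: "(\<Sum>n\<in>S. if n = j then (\<Sum>i\<in>{1..<n}. cst (of_nat n) * p i * p (n-i) * h) else 0)
      = cst (of_nat j) * (\<Sum>i\<in>{1..<j}. p i * p (j-i)) * h"
    using assms by (simp add: sum_distrib_left sum_distrib_right mult_ac)
  show ?thesis by (simp only: s0 s1 s2)
qed

lemma D3_p:
  assumes "finite S" "j \<in> S"
  shows "D3 S (p j * h) = p j * D3 S h + cst (of_nat (j*(j-1))) * p j * h"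
proof -
  have "D3 S (p j * h) = (\<Sum>i\<in>S. p j * (cst (of_nat (i*(i-1))) * p i * pd (P i) h)
     + (if i = j then cst (of_nat (i*(i-1))) * p i * h else 0))"
    unfolding D3_def pdP_p by (intro sum.cong refl) (simp add: algebra_simps)
  also have "\<dots> = (\<Sum>i\<in>S. p j * (cst (of_nat (i*(i-1))) * p i * pd (P i) h))
     + (\<Sum>i\<in>S. if i = j then cst (of_nat (i*(i-1))) * p i * h else 0)"
    by (simp only: sum.distrib)
  also have "\<dots> = p j * D3 S h + cst (of_nat (j*(j-1))) * p j * h"
    using assms by (simp add: D3_def sum_distrib_left)
  finally show ?thesis .
qed


lemma Pidx_p: "Pidx (p j) \<subseteq> {j}"
  by (auto simp: Pidx_def)

lemma Pidx_p_mult: "1 \<le> j \<Longrightarrow> j \<le> N \<Longrightarrow> pmax h \<le> N \<Longrightarrow> Pidx (p j * h) \<subseteq> {1..N}"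
proof -
  assume a: "1 \<le> j" "j \<le> N" "pmax h \<le> N"
  have "Pidx (p j * h) \<subseteq> {j} \<union> {1..pmax h}"
    using Pidx_mult[of "p j" h] Pidx_p[of j] Pidx_sub_pmax[of h] by blast
  also have "\<dots> \<subseteq> {1..N}" using a by auto
  finally show ?thesis .
qed

lemma Dalpha_N: "pmax h \<le> N \<Longrightarrow> Dalpha h = DS {1..N} h"
  by (rule Dalpha_S) (use Pidx_sub_pmax[of h] in auto)

lemma Dalpha_p:
  assumes "1 \<le> j" "j \<le> N" "pmax h \<le> N"
  shows "Dalpha (p j * h) = p j * Dalpha h + cst (inverse 2) *
     (cst bt * (2 * (\<Sum>i\<in>{1..N}. cst (of_nat (i*j)) * p (i+j) * pd (P i) h))
      + cst (of_nat j) * (\<Sum>i\<in>{1..<j}. p i * p (j-i)) * h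
      + cst bb * (cst (of_nat (j*(j-1))) * p j * h))"
proof -
  have jS: "j \<in> {1..N}" using assms by auto
  have "Dalpha (p j * h) = DS {1..N} (p j * h)"
    by (rule Dalpha_S) (use Pidx_p_mult[OF assms] in auto)
  moreover have "Dalpha h = DS {1..N} h" by (rule Dalpha_N[OF assms(3)])
  ultimately show ?thesis
    by (simp only: DS_split D1_p[OF _ jS] D2_p[OF _ jS] D3_p[OF _ jS] finite_atLeastAtMost)
       (simp add: algebra_simps)
qed

lemma delta2:
  assumes "c \<le> (N::nat)"
  shows "(\<Sum>i\<in>{1..N}. \<Sum>j\<in>{1..N}. if c = i + j then F i j else (0::mpoly)) = (\<Sum>i\<in>{1..<c}. F i (c - i))"
proof -
  have "(\<Sum>i\<in>{1..N}. \<Sum>j\<in>{1..N}. if c = i + j then F i j else 0)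
      = (\<Sum>i\<in>{1..N}. if i < c then F i (c - i) else 0)"
  proof (rule sum.cong[OF refl])
    fix i assume i: "i \<in> {1..N}"
    have "(\<Sum>j\<in>{1..N}. if c = i + j then F i j else 0) = (\<Sum>j\<in>{1..N}. if j = c - i \<and> i < c then F i (c - i) else 0)"
    proof (rule sum.cong[OF refl])
      fix j assume "j \<in> {1..N}"
      then show "(if c = i + j then F i j else 0) = (if j = c - i \<and> i < c then F i (c - i) else 0)"
        by (cases "c = i + j") auto
    qed
    also have "\<dots> = (if i < c then F i (c - i) else 0)"
      using assms i by (cases "i < c") auto
    finally show "(\<Sum>j\<in>{1..N}. if c = i + j then F i j else 0) = (if i < c then F i (c - i) else 0)" .
  qed
  also have "\<dots> = (\<Sum>i\<in>{1..<c}. F i (c - i))"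
  proof -
    have "(\<Sum>i\<in>{1..N}. if i < c then F i (c - i) else 0) = (\<Sum>i\<in>{i\<in>{1..N}. i < c}. F i (c - i))"
      by (rule sum.inter_filter[symmetric]) simp
    also have "{i\<in>{1..N}. i < c} = {1..<c}" using assms by auto
    finally show ?thesis .
  qed
  finally show ?thesis .
qed

lemma pdP_D1:
  assumes "1 \<le> c" "c \<le> N"
  shows "pd (P c) (D1 {1..N} h) = D1 {1..N} (pd (P c) h)
     + (\<Sum>i\<in>{1..<c}. cst (of_nat (i*(c-i))) * pd (P i) (pd (P (c-i)) h))"
proof -
  have "pd (P c) (D1 {1..N} h) = (\<Sum>i\<in>{1..N}. \<Sum>j\<in>{1..N}.
      cst (of_nat (i*j)) * p (i+j) * pd (P i) (pd (P j) (pd (P c) h))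
      + (if c = i + j then cst (of_nat (i*j)) * pd (P i) (pd (P j) h) else 0))"
    unfolding D1_def pd_sum
  proof (intro sum.cong refl)
    fix i j
    have "pd (P c) (pd (P i) (pd (P j) h)) = pd (P i) (pd (P j) (pd (P c) h))"
      by (metis pd_comm)
    then show "pd (P c) (cst (of_nat (i*j)) * p (i+j) * pd (P i) (pd (P j) h)) =
      cst (of_nat (i*j)) * p (i+j) * pd (P i) (pd (P j) (pd (P c) h))
      + (if c = i + j then cst (of_nat (i*j)) * pd (P i) (pd (P j) h) else 0)"
      by (simp add: pd_mult pd_vr)
  qed
  also have "\<dots> = D1 {1..N} (pd (P c) h)
     + (\<Sum>i\<in>{1..N}. \<Sum>j\<in>{1..N}. if c = i + j then cst (of_nat (i*j)) * pd (P i) (pd (P j) h) else 0)"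
    by (simp only: sum.distrib D1_def)
  finally have s0: "pd (P c) (D1 {1..N} h) = D1 {1..N} (pd (P c) h)
     + (\<Sum>i\<in>{1..N}. \<Sum>j\<in>{1..N}. if c = i + j then cst (of_nat (i*j)) * pd (P i) (pd (P j) h) else 0)" .
  have s1: "(\<Sum>i\<in>{1..N}. \<Sum>j\<in>{1..N}. if c = i + j then cst (of_nat (i*j)) * pd (P i) (pd (P j) h) else 0)
     = (\<Sum>i\<in>{1..<c}. cst (of_nat (i*(c-i))) * pd (P i) (pd (P (c-i)) h))"
    by (rule delta2[OF assms(2)])
  show ?thesis by (simp only: s0 s1)
qed

lemma pdP_D2:
  assumes "1 \<le> c" "c \<le> N"
  shows "pd (P c) (D2 {1..N} h) = D2 {1..N} (pd (P c) h)
     + 2 * (\<Sum>j\<in>{1..N-c}. cst (of_nat (j+c)) * p j * pd (P (j+c)) h)"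
proof -
  have "pd (P c) (D2 {1..N} h) = (\<Sum>n\<in>{1..N}. \<Sum>i\<in>{1..<n}.
      cst (of_nat n) * p i * p (n-i) * pd (P n) (pd (P c) h)
      + (if c = i then cst (of_nat n) * p (n-i) * pd (P n) h else 0)
      + (if c = n - i then cst (of_nat n) * p i * pd (P n) h else 0))"
    unfolding D2_def pd_sum
  proof (intro sum.cong refl)
    fix n i
    have "pd (P c) (pd (P n) h) = pd (P n) (pd (P c) h)"
      by (rule pd_comm)
    then show "pd (P c) (cst (of_nat n) * p i * p (n-i) * pd (P n) h) =
      cst (of_nat n) * p i * p (n-i) * pd (P n) (pd (P c) h)
      + (if c = i then cst (of_nat n) * p (n-i) * pd (P n) h else 0)
      + (if c = n - i then cst (of_nat n) * p i * pd (P n) h else 0)"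
      by (simp add: pd_mult pd_vr)
  qed
  also have "\<dots> = D2 {1..N} (pd (P c) h)
     + (\<Sum>n\<in>{1..N}. \<Sum>i\<in>{1..<n}. if c = i then cst (of_nat n) * p (n-i) * pd (P n) h else 0)
     + (\<Sum>n\<in>{1..N}. \<Sum>i\<in>{1..<n}. if c = n - i then cst (of_nat n) * p i * pd (P n) h else 0)"
    by (simp only: sum.distrib D2_def)
  finally have s0: "pd (P c) (D2 {1..N} h) = D2 {1..N} (pd (P c) h)
     + (\<Sum>n\<in>{1..N}. \<Sum>i\<in>{1..<n}. if c = i then cst (of_nat n) * p (n-i) * pd (P n) h else 0)
     + (\<Sum>n\<in>{1..N}. \<Sum>i\<in>{1..<n}. if c = n - i then cst (of_nat n) * p i * pd (P n) h else 0)" .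
  have s1: "(\<Sum>n\<in>{1..N}. \<Sum>i\<in>{1..<n}. if c = i then cst (of_nat n) * p (n-i) * pd (P n) h else 0)
      = (\<Sum>n\<in>{1..N}. if c < n then cst (of_nat n) * p (n-c) * pd (P n) h else 0)"
    by (rule sum.cong[OF refl]) (use assms in auto)
  have s2: "(\<Sum>n\<in>{1..N}. \<Sum>i\<in>{1..<n}. if c = n - i then cst (of_nat n) * p i * pd (P n) h else 0)
      = (\<Sum>n\<in>{1..N}. if c < n then cst (of_nat n) * p (n-c) * pd (P n) h else 0)"
  proof (rule sum.cong[OF refl])
    fix n assume "n \<in> {1..N}"
    have "(\<Sum>i\<in>{1..<n}. if c = n - i then cst (of_nat n) * p i * pd (P n) h else 0)
        = (\<Sum>i\<in>{1..<n}. if i = n - c \<and> c < n then cst (of_nat n) * p (n-c) * pd (P n) h else 0)"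
      by (rule sum.cong[OF refl]) (use assms in auto)
    also have "\<dots> = (if c < n then cst (of_nat n) * p (n-c) * pd (P n) h else 0)"
      using assms by (cases "c < n") auto
    finally show "(\<Sum>i\<in>{1..<n}. if c = n - i then cst (of_nat n) * p i * pd (P n) h else 0)
        = (if c < n then cst (of_nat n) * p (n-c) * pd (P n) h else 0)" .
  qed
  have s3: "(\<Sum>n\<in>{1..N}. if c < n then cst (of_nat n) * p (n-c) * pd (P n) h else 0)
      = (\<Sum>j\<in>{1..N-c}. cst (of_nat (j+c)) * p j * pd (P (j+c)) h)"
  proof -
    have "(\<Sum>n\<in>{1..N}. if c < n then cst (of_nat n) * p (n-c) * pd (P n) h else 0)
       = (\<Sum>n\<in>{n\<in>{1..N}. c < n}. cst (of_nat n) * p (n-c) * pd (P n) h)"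
      by (rule sum.inter_filter[symmetric]) simp
    also have "{n\<in>{1..N}. c < n} = {c<..N}" using assms by auto
    finally have "(\<Sum>n\<in>{1..N}. if c < n then cst (of_nat n) * p (n-c) * pd (P n) h else 0)
       = (\<Sum>n\<in>{c<..N}. cst (of_nat n) * p (n-c) * pd (P n) h)" .
    also have "\<dots> = (\<Sum>j\<in>{1..N-c}. cst (of_nat (j+c)) * p j * pd (P (j+c)) h)"
      by (simp add: sum_gt_shift)
    finally show ?thesis .
  qed
  show ?thesis by (simp only: s0 s1 s2 s3 mult_2 add.assoc)
qed

lemma pdP_D3:
  assumes "1 \<le> c" "c \<le> N"
  shows "pd (P c) (D3 {1..N} h) = D3 {1..N} (pd (P c) h) + cst (of_nat (c*(c-1))) * pd (P c) h"
proof -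
  have "pd (P c) (D3 {1..N} h) = (\<Sum>i\<in>{1..N}.
      cst (of_nat (i*(i-1))) * p i * pd (P i) (pd (P c) h)
      + (if c = i then cst (of_nat (i*(i-1))) * pd (P i) h else 0))"
    unfolding D3_def pd_sum
  proof (intro sum.cong refl)
    fix i
    have "pd (P c) (pd (P i) h) = pd (P i) (pd (P c) h)"
      by (rule pd_comm)
    then show "pd (P c) (cst (of_nat (i*(i-1))) * p i * pd (P i) h) =
      cst (of_nat (i*(i-1))) * p i * pd (P i) (pd (P c) h)
      + (if c = i then cst (of_nat (i*(i-1))) * pd (P i) h else 0)"
      by (simp add: pd_mult pd_vr)
  qed
  also have "\<dots> = D3 {1..N} (pd (P c) h) + cst (of_nat (c*(c-1))) * pd (P c) h"
    using assms by (simp add: sum.distrib D3_def)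
  finally show ?thesis .
qed

lemma Dalpha_pd:
  assumes "1 \<le> c" "c \<le> N" "pmax h \<le> N"
  shows "pd (P c) (Dalpha h) = Dalpha (pd (P c) h) + cst (inverse 2) *
     (cst bt * (\<Sum>i\<in>{1..<c}. cst (of_nat (i*(c-i))) * pd (P i) (pd (P (c-i)) h))
      + 2 * (\<Sum>j\<in>{1..N-c}. cst (of_nat (j+c)) * p j * pd (P (j+c)) h)
      + cst bb * (cst (of_nat (c*(c-1))) * pd (P c) h))"
proof -
  have 1: "Dalpha h = DS {1..N} h" by (rule Dalpha_N[OF assms(3)])
  have 2: "Dalpha (pd (P c) h) = DS {1..N} (pd (P c) h)"
    by (rule Dalpha_N) (use pmax_pd[of "P c" h] assms in linarith)
  show ?thesis
    unfolding 1 2 DS_split pd_add pd_cst_mult pdP_D1[OF assms(1,2)] pdP_D2[OF assms(1,2)] pdP_D3[OF assms(1,2)]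
    by (simp add: algebra_simps)
qed



lemma of_nat_K_eq_0: "(of_nat n :: K) = 0 \<longleftrightarrow> n = 0"
proof -
  have e1: "(of_nat n :: K) = Fract (of_nat n) 1" by (rule of_nat_fract)
  have z: "(0::K) = Fract 0 1" by (rule Zero_fract_def)
  have "(of_nat n :: K) = 0 \<longleftrightarrow> Fract (of_nat n) 1 = Fract (0::rat poly) 1"
    by (metis e1 z)
  also have "\<dots> \<longleftrightarrow> (of_nat n :: rat poly) * 1 = 0 * 1"
    by (rule eq_fract(1)) simp_all
  finally show ?thesis by simp
qed

lemma two_K: "(2::K) \<noteq> 0"
  using of_nat_K_eq_0[of 2] by simp

lemma cst_numeral: "cst (numeral n) = numeral n"
  by (simp add: cst_def)

lemma two_inv: "2 * cst (inverse 2) = (1::mpoly)"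
proof -
  have a: "cst (2 * inverse 2) = (1::mpoly)" using two_K by simp
  have b: "cst (2 * inverse 2) = 2 * cst (inverse 2)" by (simp only: cst_mult cst_numeral)
  show ?thesis using a b by simp
qed

lemma cancel2: "2 * A = 2 * B \<Longrightarrow> A = (B::mpoly)"
proof -
  assume a: "2 * A = 2 * B"
  have "A = (cst (inverse 2) * 2) * A" using two_inv by (simp add: mult.commute)
  also have "\<dots> = cst (inverse 2) * (2 * B)" by (simp only: mult.assoc a)
  also have "\<dots> = (2 * cst (inverse 2)) * B" by (simp add: ac_simps)
  also have "\<dots> = B" by (simp only: two_inv mult_1)
  finally show ?thesis .
qed

lemma sum_reflect: "(\<Sum>i\<in>{1..<n}. F i) = (\<Sum>i\<in>{1..<(n::nat)}. F (n - i))"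
  by (rule sum.reindex_bij_witness[of _ "\<lambda>i. n - i" "\<lambda>i. n - i"]) (auto simp: diff_diff_cancel)

lemma sym_sum:
  assumes "\<And>i. i \<in> {1..<n} \<Longrightarrow> g (n - i) = g i"
  shows "2 * (\<Sum>i\<in>{1..<n}. of_nat i * g i) = of_nat n * (\<Sum>i\<in>{1..<n}. (g i :: mpoly))"
proof -
  have "(\<Sum>i\<in>{1..<n}. of_nat i * g i) = (\<Sum>i\<in>{1..<n}. of_nat (n - i) * g (n - i))"
    by (rule sum_reflect)
  also have "\<dots> = (\<Sum>i\<in>{1..<n}. of_nat (n - i) * g i)"
  proof (rule sum.cong[OF refl])
    fix i assume "i \<in> {1..<n}"
    then show "of_nat (n - i) * g (n - i) = of_nat (n - i) * g i" using assms by simp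
  qed
  finally have r: "(\<Sum>i\<in>{1..<n}. of_nat i * g i) = (\<Sum>i\<in>{1..<n}. of_nat (n - i) * g i)" .
  have "2 * (\<Sum>i\<in>{1..<n}. of_nat i * g i) = (\<Sum>i\<in>{1..<n}. of_nat i * g i) + (\<Sum>i\<in>{1..<n}. of_nat (n - i) * g i)"
    by (simp only: mult_2 r)
  also have "\<dots> = (\<Sum>i\<in>{1..<n}. (of_nat i + of_nat (n - i)) * g i)"
    by (simp only: sum.distrib distrib_right)
  also have "\<dots> = (\<Sum>i\<in>{1..<n}. of_nat n * g i)"
  proof (rule sum.cong[OF refl])
    fix i assume "i \<in> {1..<n}"
    then have "i + (n - i) = n" by simp
    then have "(of_nat i + of_nat (n - i) :: mpoly) = of_nat n" by (metis of_nat_add)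
    then show "(of_nat i + of_nat (n - i)) * g i = of_nat n * g i" by simp
  qed
  also have "\<dots> = of_nat n * (\<Sum>i\<in>{1..<n}. g i)" by (simp only: sum_distrib_left)
  finally show ?thesis .
qed


lemma pd_of_nat[simp]: "pd v (of_nat n) = 0"
  by (metis cst_of_nat pd_cst)

lemma pd_numeral[simp]: "pd v (numeral n) = 0"
  by (metis cst_numeral pd_cst)

lemma pd_one[simp]: "pd v 1 = 0"
  by (metis cst_1 pd_cst)

lemma two_inv_mult: "2 * (cst (inverse 2) * X) = (X::mpoly)"
  by (simp only: two_inv mult.assoc[symmetric] mult_1)

lemma Lt_lt: "m < k \<Longrightarrow> Lt k m h = p (k - m) * h" by (simp add: Lt_def)
lemma Lt_eq: "Lt k k h = cst (bb * of_nat k) * h" by (simp add: Lt_def)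
lemma Lt_gt: "k < m \<Longrightarrow> Lt k m h = cst (bt * of_nat (m - k)) * pd (P (m - k)) h" by (simp add: Lt_def)
lemma Mt_lt: "m < k \<Longrightarrow> Mt k m h = cst (of_nat m) * p (k - m) * h" by (simp add: Mt_def)
lemma Mt_eq: "Mt k k h = Dalpha h + cst (bb * of_nat k * of_nat (k-1) * inverse 2) * h" by (simp add: Mt_def)
lemma Mt_gt: "k < m \<Longrightarrow> Mt k m h = cst (bt * of_nat k * of_nat (m - k)) * pd (P (m - k)) h" by (simp add: Mt_def)

lemma coef_a: "2 * (bb * of_nat k) + 2 * (bb * of_nat k * of_nat (k-1) * inverse 2) = bb * of_nat ((k+1)*k :: nat)"
proof (cases k)
  case (Suc k')
  then show ?thesis using two_K by (simp add: field_simps)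
qed simp

lemma TIa:
  "(\<Sum>m\<le>k + pmax h. p (m+1) * (Lt k m h + Mt k m h)) = Dalpha (p (k+1) * h)"
proof -
  define K where "K = k + pmax h"
  define N where "N = K + 1"
  let ?F = "\<lambda>m. p (m+1) * (Lt k m h + Mt k m h)"
  have split: "(\<Sum>m\<le>K. ?F m) = (\<Sum>m<k. ?F m) + ?F k + (\<Sum>m\<in>{k<..K}. ?F m)"
    by (rule sum_split3) (simp add: K_def)
  have A1: "(\<Sum>m<k. ?F m) = (\<Sum>m<k. of_nat (m+1) * (p (m+1) * p (k+1-(m+1)) * h))"
    by (rule sum.cong[OF refl]) (simp add: Lt_lt Mt_lt cst_of_nat algebra_simps)
  have A2: "(\<Sum>m<k. of_nat (m+1) * (p (m+1) * p (k+1-(m+1)) * h))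
      = (\<Sum>i\<in>{1..<k+1}. of_nat i * (p i * p (k+1-i) * h))"
    using sum.shift_bounds_Suc_ivl[of "\<lambda>i. of_nat i * (p i * p (k+1-i) * h)" 0 k]
    by (simp add: atLeast0LessThan)
  have A3: "2 * (\<Sum>i\<in>{1..<k+1}. of_nat i * (p i * p (k+1-i) * h))
      = of_nat (k+1) * (\<Sum>i\<in>{1..<k+1}. p i * p (k+1-i) * h)"
    by (rule sym_sum) (auto simp: mult_ac)
  have A: "2 * (\<Sum>m<k. ?F m) = of_nat (k+1) * ((\<Sum>i\<in>{1..<k+1}. p i * p (k+1-i)) * h)"
  proof -
    have A4: "(\<Sum>i\<in>{1..<k+1}. p i * p (k+1-i) * h) = (\<Sum>i\<in>{1..<k+1}. p i * p (k+1-i)) * h"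
      by (simp only: sum_distrib_right)
    show ?thesis by (simp only: A1 A2 A3 A4)
  qed
  have B: "2 * ?F k = 2 * (p (k+1) * Dalpha h) + cst bb * of_nat ((k+1)*k) * (p (k+1) * h)"
  proof -
    have "2 * ?F k = 2 * (p (k+1) * Dalpha h)
        + cst (2 * (bb * of_nat k) + 2 * (bb * of_nat k * of_nat (k-1) * inverse 2)) * (p (k+1) * h)"
      by (simp only: Lt_eq Mt_eq cst_add cst_mult cst_numeral) (simp add: algebra_simps)
    also have "\<dots> = 2 * (p (k+1) * Dalpha h) + cst bb * of_nat ((k+1)*k) * (p (k+1) * h)"
      by (simp only: coef_a cst_mult cst_of_nat)
    finally show ?thesis .
  qed
  have C1: "(\<Sum>m\<in>{k<..K}. ?F m) = (\<Sum>i\<in>{1..pmax h}. ?F (i + k))"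
    by (simp add: sum_gt_shift K_def)
  have C2: "(\<Sum>i\<in>{1..pmax h}. ?F (i + k))
      = (\<Sum>i\<in>{1..pmax h}. cst bt * of_nat (k+1) * (of_nat i * p (i + (k+1)) * pd (P i) h))"
    by (rule sum.cong[OF refl]) (simp add: Lt_gt Mt_gt cst_mult cst_add cst_of_nat algebra_simps)
  have C3: "(\<Sum>i\<in>{1..pmax h}. cst bt * of_nat (k+1) * (of_nat i * p (i + (k+1)) * pd (P i) h))
      = (\<Sum>i\<in>{1..N}. cst bt * of_nat (k+1) * (of_nat i * p (i + (k+1)) * pd (P i) h))"
    by (rule sum_range_ext[of "pmax h"]) (auto simp: pd_P_beyond N_def K_def)
  have C: "(\<Sum>m\<in>{k<..K}. ?F m) = cst bt * of_nat (k+1) * (\<Sum>i\<in>{1..N}. of_nat i * p (i + (k+1)) * pd (P i) h)"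
    using C1 C2 C3 by (simp add: sum_distrib_left)
  have R: "Dalpha (p (k+1) * h) = p (k+1) * Dalpha h + cst (inverse 2) *
     (cst bt * (2 * (\<Sum>i\<in>{1..N}. cst (of_nat (i*(k+1))) * p (i+(k+1)) * pd (P i) h))
      + cst (of_nat (k+1)) * (\<Sum>i\<in>{1..<k+1}. p i * p (k+1-i)) * h
      + cst bb * (cst (of_nat ((k+1)*(k+1-1))) * p (k+1) * h))"
    by (rule Dalpha_p) (auto simp: N_def K_def)
  have R1: "(\<Sum>i\<in>{1..N}. cst (of_nat (i*(k+1))) * p (i+(k+1)) * pd (P i) h)
     = of_nat (k+1) * (\<Sum>i\<in>{1..N}. of_nat i * p (i + (k+1)) * pd (P i) h)"
    by (simp only: cst_of_nat) (simp add: sum_distrib_left algebra_simps)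
  define SA where "SA = (\<Sum>m<k. ?F m)"
  define SC where "SC = (\<Sum>m\<in>{k<..K}. ?F m)"
  define SZ where "SZ = (\<Sum>i\<in>{1..N}. of_nat i * p (i + (k+1)) * pd (P i) h)"
  define SP where "SP = (\<Sum>i\<in>{1..<k+1}. p i * p (k+1-i))"
  define FK where "FK = ?F k"
  define DD where "DD = Dalpha h"
  have A': "2 * SA = of_nat (k+1) * (SP * h)" using A unfolding SA_def SP_def .
  have B': "2 * FK = 2 * (p (k+1) * DD) + cst bb * of_nat ((k+1)*k) * (p (k+1) * h)"
    using B unfolding FK_def DD_def .
  have C': "SC = cst bt * of_nat (k+1) * SZ" using C unfolding SC_def SZ_def .
  have R': "Dalpha (p (k+1) * h) = p (k+1) * DD + cst (inverse 2) *
     (cst bt * (2 * (of_nat (k+1) * SZ)) + cst (of_nat (k+1)) * SP * h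
      + cst bb * (cst (of_nat ((k+1)*(k+1-1))) * p (k+1) * h))"
    using R unfolding R1 SZ_def SP_def DD_def .
  have S': "(\<Sum>m\<le>K. ?F m) = SA + FK + SC" using split unfolding SA_def FK_def SC_def .
  have "2 * (\<Sum>m\<le>K. ?F m) = 2 * Dalpha (p (k+1) * h)"
  proof -
    have "2 * (\<Sum>m\<le>K. ?F m) = 2 * SA + 2 * FK + 2 * SC" unfolding S' by (simp add: algebra_simps)
    also have "\<dots> = of_nat (k+1) * (SP * h) + (2 * (p (k+1) * DD) + cst bb * of_nat ((k+1)*k) * (p (k+1) * h))
        + 2 * (cst bt * of_nat (k+1) * SZ)" unfolding A' B' C' ..
    also have "\<dots> = 2 * (p (k+1) * DD) + (cst bt * (2 * (of_nat (k+1) * SZ)) + cst (of_nat (k+1)) * SP * h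
      + cst bb * (cst (of_nat ((k+1)*(k+1-1))) * p (k+1) * h))"
      by (simp add: cst_of_nat cst_mult cst_add algebra_simps)
    also have "\<dots> = 2 * Dalpha (p (k+1) * h)"
      unfolding R' distrib_left two_inv_mult ..
    finally show ?thesis .
  qed
  then show ?thesis unfolding K_def by (rule cancel2)
qed


lemma sum_mid_shift: "(\<Sum>l\<in>{k<..<m}. F l) = (\<Sum>a\<in>{1..<m-k}. F (a + (k::nat)))"
  by (rule sum.reindex_bij_witness[of _ "\<lambda>a. a + k" "\<lambda>l. l - k"]) (auto simp: le_add_diff_inverse2)

lemma sum_split5:
  assumes "k < m" "m \<le> (B::nat)"
  shows "(\<Sum>l\<le>B. F l) = (\<Sum>l<k. F l) + F k + (\<Sum>a\<in>{1..<m-k}. F (a + k)) + F m + (\<Sum>j\<in>{1..B-m}. F (j + m))"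
proof -
  have 1: "(\<Sum>l\<le>B. F l) = (\<Sum>l<k. F l) + F k + (\<Sum>l\<in>{k<..B}. F l)"
    by (rule sum_split3) (use assms in auto)
  have e: "{k<..B} = insert m ({k<..<m} \<union> {m<..B})" using assms by auto
  have 2: "(\<Sum>l\<in>{k<..B}. F l) = F m + ((\<Sum>l\<in>{k<..<m}. F l) + (\<Sum>l\<in>{m<..B}. F l))"
  proof -
    have "sum F ({k<..<m} \<union> {m<..B}) = sum F {k<..<m} + sum F {m<..B}"
      by (rule sum.union_disjoint) auto
    then show ?thesis unfolding e by (subst sum.insert) auto
  qed
  show ?thesis unfolding 1 unfolding 2 unfolding sum_mid_shift sum_gt_shift by (simp add: algebra_simps)
qed

lemma TIb_eq:
  "Mt l k (Lt k l h) = Lt l k (Mt k l h)"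
proof -
  consider "l < k" | "l = k" | "k < l" by linarith
  then show ?thesis
  proof cases
    case 1
    then show ?thesis by (simp add: Lt_def Mt_def pd_mult pd_vr cst_mult cst_add cst_diff cst_of_nat algebra_simps)
  next
    case 2
    then show ?thesis by (simp only: Lt_eq Mt_eq Dalpha_add Dalpha_cst) (simp add: algebra_simps)
  next
    case 3
    then show ?thesis by (simp add: Lt_def Mt_def pd_mult pd_vr cst_mult cst_add cst_diff cst_of_nat algebra_simps)
  qed
qed



lemma two_cst_half: "2 * cst (x * inverse 2) = cst x"
proof -
  have "2 * cst (x * inverse 2) = cst (2 * (x * inverse 2))" by (simp only: cst_mult cst_numeral)
  also have "2 * (x * inverse 2) = x" using two_K by simp
  finally show ?thesis .
qed

lemma of_nat_nn1: "(of_nat (n * (n - 1)) :: 'a::comm_ring_1) = of_nat n * of_nat n - of_nat n"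
  by (cases n) (simp_all add: algebra_simps)

lemma half_coef: "2 * cst (bb * of_nat n * of_nat (n-1) * inverse 2) = cst bb * (of_nat n * of_nat n - of_nat n)"
proof -
  have e: "bb * of_nat n * of_nat (n-1) = bb * (of_nat n * of_nat n - (of_nat n :: K))"
    by (cases n) (simp_all add: algebra_simps)
  have "2 * cst (bb * of_nat n * of_nat (n-1) * inverse 2) = cst (bb * of_nat n * of_nat (n-1))"
    by (rule two_cst_half)
  also have "\<dots> = cst (bb * (of_nat n * of_nat n - of_nat n))" by (simp only: e)
  also have "\<dots> = cst bb * (of_nat n * of_nat n - of_nat n)" by (simp only: cst_mult cst_diff cst_of_nat)
  finally show ?thesis .
qed

lemma aux1: "2 * (X + B * Z) = 2 * X + (2 * B) * (Z::mpoly)"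
  by (simp add: algebra_simps)
lemma aux2: "2 * (A * (X + B * Z)) = A * (2 * X) + A * ((2 * B) * (Z::mpoly))"
  by (simp add: algebra_simps)

lemma sum_of_nat_mult_c:
  "(\<Sum>i\<in>A. cst (of_nat (i*c)) * p (i+c) * pd (P i) h) = of_nat c * (\<Sum>i\<in>A. of_nat i * (p (i+c) * pd (P i) h))"
  unfolding sum_distrib_left by (rule sum.cong[OF refl]) (simp add: cst_mult cst_of_nat algebra_simps)

context
  fixes m c :: nat and h :: mpoly
  assumes c1: "1 \<le> c"
begin

lemma L1: "l < m \<Longrightarrow> Mt l m (Lt (m+c) l h) = Lt l m (Mt (m+c) l h)"
  by (simp add: Lt_def Mt_def pd_mult pd_vr cst_mult cst_add cst_diff cst_of_nat algebra_simps)

lemma L2: "Mt m m (Lt (m+c) m h) = Dalpha (p c * h) + cst (bb * of_nat m * of_nat (m-1) * inverse 2) * (p c * h)"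
  using c1 by (simp add: Lt_def Mt_eq)

lemma L3: "Lt m m (Mt (m+c) m h) = cst (bb * of_nat m) * (of_nat m * (p c * h))"
  using c1 by (simp add: Lt_eq Mt_def cst_of_nat mult.assoc)

lemma L4: "1 \<le> a \<Longrightarrow> a < c \<Longrightarrow> Lt (a+m) m (Mt (m+c) (a+m) h) = Mt (a+m) m (Lt (m+c) (a+m) h) + of_nat a * (p a * p (c-a) * h)"
proof -
  assume a: "1 \<le> a" "a < c"
  have e: "m + c - (a + m) = c - a" by arith
  show ?thesis using a by (simp add: Lt_def Mt_def e cst_add cst_of_nat algebra_simps)
qed

lemma L5: "Mt (m+c) m (Lt (m+c) (m+c) h) = of_nat m * (cst (bb * of_nat (m+c)) * (p c * h))"
  using c1 by (simp add: Lt_eq Mt_def cst_of_nat algebra_simps)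

lemma L6: "Lt (m+c) m (Mt (m+c) (m+c) h) = p c * Dalpha h + cst (bb * of_nat (m+c) * of_nat (m+c-1) * inverse 2) * (p c * h)"
  using c1 by (simp add: Lt_def Mt_eq algebra_simps)

lemma L7: "1 \<le> j \<Longrightarrow> Lt (j+(m+c)) m (Mt (m+c) (j+(m+c)) h) = Mt (j+(m+c)) m (Lt (m+c) (j+(m+c)) h)
     + cst bt * of_nat c * (of_nat j * (p (j+c) * pd (P j) h))"
proof -
  assume j: "1 \<le> j"
  have e1: "j + (m + c) - m = j + c" by arith
  have e2: "j + (m + c) - (m + c) = j" by arith
  show ?thesis using j c1
    by (simp add: Lt_def Mt_def e1 e2 cst_mult cst_add cst_of_nat algebra_simps)
qed


lemma TIb_mlt:
  assumes B: "m + c + pmax h \<le> B"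
  shows "(\<Sum>l\<le>B. Mt l m (Lt (m+c) l h)) = (\<Sum>l\<le>B. Lt l m (Mt (m+c) l h))"
proof -
  have mk: "m < m + c" "m + c \<le> B" using c1 B by auto
  have cc: "m + c - m = c" by simp
  define LL where "LL = (\<Sum>l<m. Mt l m (Lt (m+c) l h))"
  define MF where "MF = (\<Sum>a\<in>{1..<c}. Mt (a+m) m (Lt (m+c) (a+m) h))"
  define HF where "HF = (\<Sum>j\<in>{1..B-(m+c)}. Mt (j+(m+c)) m (Lt (m+c) (j+(m+c)) h))"
  define SaY where "SaY = (\<Sum>a\<in>{1..<c}. of_nat a * (p a * p (c-a) * h))"
  define SY where "SY = (\<Sum>a\<in>{1..<c}. p a * p (c-a))"
  define SZk where "SZk = (\<Sum>j\<in>{1..B-(m+c)}. of_nat j * (p (j+c) * pd (P j) h))"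
  define SZ where "SZ = (\<Sum>j\<in>{1..B}. of_nat j * (p (j+c) * pd (P j) h))"
  define DD where "DD = Dalpha h"
  define PC where "PC = p c * h"
  have sL: "(\<Sum>l\<le>B. Mt l m (Lt (m+c) l h)) = LL + Mt m m (Lt (m+c) m h) + MF + Mt (m+c) m (Lt (m+c) (m+c) h) + HF"
    unfolding LL_def MF_def HF_def using sum_split5[OF mk, of "\<lambda>l. Mt l m (Lt (m+c) l h)"] by (simp only: cc)
  have sR: "(\<Sum>l\<le>B. Lt l m (Mt (m+c) l h)) = (\<Sum>l<m. Lt l m (Mt (m+c) l h)) + Lt m m (Mt (m+c) m h)
      + (\<Sum>a\<in>{1..<c}. Lt (a+m) m (Mt (m+c) (a+m) h)) + Lt (m+c) m (Mt (m+c) (m+c) h)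
      + (\<Sum>j\<in>{1..B-(m+c)}. Lt (j+(m+c)) m (Mt (m+c) (j+(m+c)) h))"
    using sum_split5[OF mk, of "\<lambda>l. Lt l m (Mt (m+c) l h)"] by (simp only: cc)
  have low: "(\<Sum>l<m. Lt l m (Mt (m+c) l h)) = LL"
    unfolding LL_def by (rule sum.cong[OF refl]) (simp add: L1)
  have mid: "(\<Sum>a\<in>{1..<c}. Lt (a+m) m (Mt (m+c) (a+m) h)) = MF + SaY"
    unfolding MF_def SaY_def sum.distrib[symmetric] by (rule sum.cong[OF refl]) (simp add: L4)
  have hi: "(\<Sum>j\<in>{1..B-(m+c)}. Lt (j+(m+c)) m (Mt (m+c) (j+(m+c)) h)) = HF + cst bt * of_nat c * SZk"
    unfolding HF_def SZk_def sum_distrib_left sum.distrib[symmetric] by (rule sum.cong[OF refl]) (simp add: L7)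
  have ext: "SZk = SZ"
    unfolding SZk_def SZ_def by (rule sum_range_ext[of "pmax h"]) (use B in \<open>auto simp: pd_P_beyond\<close>)
  have sym: "2 * SaY = of_nat c * (SY * h)"
  proof -
    have "2 * SaY = of_nat c * (\<Sum>a\<in>{1..<c}. p a * p (c-a) * h)"
      unfolding SaY_def by (rule sym_sum) (auto simp: mult_ac)
    then show ?thesis unfolding SY_def by (simp only: sum_distrib_right)
  qed
  have Dp: "2 * Dalpha (p c * h) = 2 * (p c * DD) + cst bt * (2 * (of_nat c * SZ)) + of_nat c * SY * h
      + cst bb * ((of_nat c * of_nat c - of_nat c) * PC)"
  proof -
    have R: "Dalpha (p c * h) = p c * Dalpha h + cst (inverse 2) *
     (cst bt * (2 * (\<Sum>i\<in>{1..B}. cst (of_nat (i*c)) * p (i+c) * pd (P i) h))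
      + cst (of_nat c) * (\<Sum>i\<in>{1..<c}. p i * p (c-i)) * h
      + cst bb * (cst (of_nat (c*(c-1))) * p c * h))"
      by (rule Dalpha_p) (use c1 B in auto)
    have e1: "(\<Sum>i\<in>{1..B}. cst (of_nat (i*c)) * p (i+c) * pd (P i) h) = of_nat c * SZ"
      unfolding SZ_def by (rule sum_of_nat_mult_c)
    have e2: "(\<Sum>i\<in>{1..<c}. p i * p (c-i)) = SY" unfolding SY_def ..
    have e3: "cst (of_nat (c*(c-1))) * p c * h = (of_nat c * of_nat c - of_nat c) * PC"
      unfolding PC_def by (simp only: of_nat_nn1 cst_diff cst_mult cst_of_nat mult.assoc)
    have "Dalpha (p c * h) = p c * DD + cst (inverse 2) *
     (cst bt * (2 * (of_nat c * SZ)) + of_nat c * SY * h + cst bb * ((of_nat c * of_nat c - of_nat c) * PC))"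
      using R[unfolded e1 e2 e3, unfolded cst_of_nat DD_def[symmetric]] .
    then show ?thesis by (simp only: distrib_left two_inv_mult add.assoc)
  qed
  have L2': "2 * Mt m m (Lt (m+c) m h) = 2 * Dalpha (p c * h) + cst bb * (of_nat m * of_nat m - of_nat m) * PC"
    unfolding L2 PC_def distrib_left by (simp only: half_coef mult.assoc[symmetric])
  have L6': "2 * Lt (m+c) m (Mt (m+c) (m+c) h) = 2 * (p c * DD) + cst bb * (of_nat (m+c) * of_nat (m+c) - of_nat (m+c)) * PC"
    unfolding L6 PC_def DD_def distrib_left by (simp only: half_coef mult.assoc[symmetric])
  have "2 * (\<Sum>l\<le>B. Mt l m (Lt (m+c) l h)) = 2 * (\<Sum>l\<le>B. Lt l m (Mt (m+c) l h))"
  proof -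
    have "2 * (\<Sum>l\<le>B. Mt l m (Lt (m+c) l h)) = 2 * LL + 2 * Mt m m (Lt (m+c) m h) + 2 * MF
        + 2 * Mt (m+c) m (Lt (m+c) (m+c) h) + 2 * HF"
      unfolding sL by (simp only: distrib_left)
    also have "\<dots> = 2 * LL + (2 * (p c * DD) + cst bt * (2 * (of_nat c * SZ)) + of_nat c * SY * h
      + cst bb * ((of_nat c * of_nat c - of_nat c) * PC) + cst bb * (of_nat m * of_nat m - of_nat m) * PC) + 2 * MF
        + 2 * (of_nat m * (cst (bb * of_nat (m+c)) * PC)) + 2 * HF"
      unfolding L2' Dp L5 PC_def ..
    also have "\<dots> = 2 * LL + 2 * Lt m m (Mt (m+c) m h) + 2 * (MF + SaY)
        + 2 * Lt (m+c) m (Mt (m+c) (m+c) h) + 2 * (HF + cst bt * of_nat c * SZk)"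
      unfolding L3 L6' ext distrib_left[of 2 MF SaY] sym PC_def
      by (simp add: cst_mult cst_add cst_of_nat algebra_simps)
    also have "\<dots> = 2 * (\<Sum>l\<le>B. Lt l m (Mt (m+c) l h))"
      unfolding sR low mid hi by (simp only: distrib_left)
    finally show ?thesis .
  qed
  then show ?thesis by (rule cancel2)
qed

end

context
  fixes k c :: nat and h :: mpoly
  assumes c1: "1 \<le> c"
begin

lemma M1: "l < k \<Longrightarrow> Mt l (k+c) (Lt k l h) = Lt l (k+c) (Mt k l h)"
proof -
  assume l: "l < k"
  have ne: "k + c - l \<noteq> k - l" using l c1 by arith
  show ?thesis using l ne by (simp add: Lt_def Mt_def pd_mult pd_vr cst_mult cst_add cst_diff cst_of_nat algebra_simps)
qed

lemma M2a: "Mt k (k+c) (Lt k k h) = cst (bt * of_nat k * of_nat c) * (cst (bb * of_nat k) * pd (P c) h)"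
  using c1 by (simp add: Lt_eq Mt_def pd_cst_mult)

lemma M2b: "Lt k (k+c) (Mt k k h) = cst (bt * of_nat c) * (pd (P c) (Dalpha h) + cst (bb * of_nat k * of_nat (k-1) * inverse 2) * pd (P c) h)"
  using c1 by (simp add: Lt_def Mt_eq pd_add pd_cst_mult)

lemma M3: "1 \<le> a \<Longrightarrow> a < c \<Longrightarrow> Mt (a+k) (k+c) (Lt k (a+k) h) = Lt (a+k) (k+c) (Mt k (a+k) h)
     + cst (bt * bt) * (of_nat a * (of_nat (a*(c-a)) * pd (P (c-a)) (pd (P a) h)))"
proof -
  assume a: "1 \<le> a" "a < c"
  have e: "k + c - (a + k) = c - a" by arith
  show ?thesis using a by (simp add: Lt_def Mt_def e pd_mult pd_add cst_mult cst_add cst_diff cst_of_nat cst_numeral algebra_simps)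
qed

lemma M4a: "Mt (k+c) (k+c) (Lt k (k+c) h) = Dalpha (cst (bt * of_nat c) * pd (P c) h)
     + cst (bb * of_nat (k+c) * of_nat (k+c-1) * inverse 2) * (cst (bt * of_nat c) * pd (P c) h)"
  using c1 by (simp add: Lt_def Mt_eq)

lemma M4b: "Lt (k+c) (k+c) (Mt k (k+c) h) = cst (bb * of_nat (k+c)) * (cst (bt * of_nat k * of_nat c) * pd (P c) h)"
  using c1 by (simp add: Lt_eq Mt_def)

lemma M5: "1 \<le> j \<Longrightarrow> Mt (j+(k+c)) (k+c) (Lt k (j+(k+c)) h) = Lt (j+(k+c)) (k+c) (Mt k (j+(k+c)) h)
     + cst bt * of_nat c * (of_nat (j+c) * (p j * pd (P (j+c)) h))"
proof -
  assume j: "1 \<le> j"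
  have e1: "j + (k + c) - (k + c) = j" by arith
  have e2: "j + (k + c) - k = j + c" by arith
  show ?thesis using j c1
    by (simp add: Lt_def Mt_def e1 e2 cst_mult cst_add cst_of_nat algebra_simps)
qed

lemma TIb_kgt:
  assumes B: "k + c + pmax h \<le> B"
  shows "(\<Sum>l\<le>B. Mt l (k+c) (Lt k l h)) = (\<Sum>l\<le>B. Lt l (k+c) (Mt k l h))"
proof -
  have mk: "k < k + c" "k + c \<le> B" using c1 B by auto
  have cc: "k + c - k = c" by simp
  define LL where "LL = (\<Sum>l<k. Lt l (k+c) (Mt k l h))"
  define MF where "MF = (\<Sum>a\<in>{1..<c}. Lt (a+k) (k+c) (Mt k (a+k) h))"
  define HF where "HF = (\<Sum>j\<in>{1..B-(k+c)}. Lt (j+(k+c)) (k+c) (Mt k (j+(k+c)) h))"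
  define W where "W = (\<lambda>a. pd (P (c-a)) (pd (P a) h))"
  define SaW where "SaW = (\<Sum>a\<in>{1..<c}. of_nat a * (of_nat (a*(c-a)) * W a))"
  define SW where "SW = (\<Sum>a\<in>{1..<c}. of_nat (a*(c-a)) * W a)"
  define SZh where "SZh = (\<Sum>j\<in>{1..B-(k+c)}. of_nat (j+c) * (p j * pd (P (j+c)) h))"
  define SZ where "SZ = (\<Sum>j\<in>{1..B}. of_nat (j+c) * (p j * pd (P (j+c)) h))"
  define DC where "DC = pd (P c) h"
  define DDC where "DDC = Dalpha (pd (P c) h)"
  have sL: "(\<Sum>l\<le>B. Mt l (k+c) (Lt k l h)) = (\<Sum>l<k. Mt l (k+c) (Lt k l h)) + Mt k (k+c) (Lt k k h)
      + (\<Sum>a\<in>{1..<c}. Mt (a+k) (k+c) (Lt k (a+k) h)) + Mt (k+c) (k+c) (Lt k (k+c) h)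
      + (\<Sum>j\<in>{1..B-(k+c)}. Mt (j+(k+c)) (k+c) (Lt k (j+(k+c)) h))"
    using sum_split5[OF mk, of "\<lambda>l. Mt l (k+c) (Lt k l h)"] by (simp only: cc)
  have sR: "(\<Sum>l\<le>B. Lt l (k+c) (Mt k l h)) = LL + Lt k (k+c) (Mt k k h) + MF + Lt (k+c) (k+c) (Mt k (k+c) h) + HF"
    unfolding LL_def MF_def HF_def using sum_split5[OF mk, of "\<lambda>l. Lt l (k+c) (Mt k l h)"] by (simp only: cc)
  have low: "(\<Sum>l<k. Mt l (k+c) (Lt k l h)) = LL"
    unfolding LL_def by (rule sum.cong[OF refl]) (simp add: M1)
  have mid: "(\<Sum>a\<in>{1..<c}. Mt (a+k) (k+c) (Lt k (a+k) h)) = MF + cst (bt * bt) * SaW"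
    unfolding MF_def SaW_def W_def sum_distrib_left sum.distrib[symmetric] by (rule sum.cong[OF refl]) (simp add: M3)
  have hi: "(\<Sum>j\<in>{1..B-(k+c)}. Mt (j+(k+c)) (k+c) (Lt k (j+(k+c)) h)) = HF + cst bt * of_nat c * SZh"
    unfolding HF_def SZh_def sum_distrib_left sum.distrib[symmetric] by (rule sum.cong[OF refl]) (simp add: M5)
  have ext: "SZh = SZ"
    unfolding SZh_def SZ_def by (rule sum_range_ext[of "pmax h"]) (use B in \<open>auto simp: pd_P_beyond\<close>)
  have sym: "2 * SaW = of_nat c * SW"
    unfolding SaW_def SW_def
  proof (rule sym_sum)
    fix a assume a: "a \<in> {1..<c}"
    then have e: "c - (c - a) = a" by simp
    have "W (c - a) = W a" unfolding W_def e by (rule pd_comm)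
    then show "of_nat ((c - a) * (c - (c - a))) * W (c - a) = of_nat (a * (c - a)) * W a"
      unfolding e by (simp add: mult.commute)
  qed
  have C1: "2 * pd (P c) (Dalpha h) = 2 * DDC + (cst bt * SW + 2 * SZ + cst bb * ((of_nat c * of_nat c - of_nat c) * DC))"
  proof -
    have R: "pd (P c) (Dalpha h) = Dalpha (pd (P c) h) + cst (inverse 2) *
     (cst bt * (\<Sum>i\<in>{1..<c}. cst (of_nat (i*(c-i))) * pd (P i) (pd (P (c-i)) h))
      + 2 * (\<Sum>j\<in>{1..B-c}. cst (of_nat (j+c)) * p j * pd (P (j+c)) h)
      + cst bb * (cst (of_nat (c*(c-1))) * pd (P c) h))"
      by (rule Dalpha_pd) (use c1 B in auto)
    have e1: "(\<Sum>i\<in>{1..<c}. cst (of_nat (i*(c-i))) * pd (P i) (pd (P (c-i)) h)) = SW"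
      unfolding SW_def W_def by (rule sum.cong[OF refl]) (simp add: cst_of_nat cst_mult cst_diff pd_comm[of "P (c - _)"])
    have e2: "(\<Sum>j\<in>{1..B-c}. cst (of_nat (j+c)) * p j * pd (P (j+c)) h) = SZ"
    proof -
      have "(\<Sum>j\<in>{1..B-c}. cst (of_nat (j+c)) * p j * pd (P (j+c)) h) = (\<Sum>j\<in>{1..B-c}. of_nat (j+c) * (p j * pd (P (j+c)) h))"
        by (simp only: cst_of_nat mult.assoc)
      also have "\<dots> = SZ" unfolding SZ_def
        by (rule sum_range_ext[of "pmax h"]) (use B in \<open>auto simp: pd_P_beyond\<close>)
      finally show ?thesis .
    qed
    have e3: "cst (of_nat (c*(c-1))) * pd (P c) h = (of_nat c * of_nat c - of_nat c) * DC"
      unfolding DC_def by (simp only: of_nat_nn1 cst_diff cst_mult cst_of_nat)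
    have "pd (P c) (Dalpha h) = DDC + cst (inverse 2) * (cst bt * SW + 2 * SZ + cst bb * ((of_nat c * of_nat c - of_nat c) * DC))"
      using R[unfolded e1 e2 e3, unfolded DDC_def[symmetric]] .
    then show ?thesis by (simp only: distrib_left two_inv_mult add.assoc)
  qed
  have M2b': "2 * Lt k (k+c) (Mt k k h) = cst (bt * of_nat c) * (2 * pd (P c) (Dalpha h)) + cst (bt * of_nat c) * (cst bb * (of_nat k * of_nat k - of_nat k) * DC)"
    unfolding M2b DC_def aux2 half_coef by (simp only: mult.assoc)
  have M4a': "2 * Mt (k+c) (k+c) (Lt k (k+c) h) = cst (bt * of_nat c) * (2 * DDC) + cst bb * (of_nat (k+c) * of_nat (k+c) - of_nat (k+c)) * (cst (bt * of_nat c) * DC)"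
    unfolding M4a DC_def DDC_def Dalpha_cst aux1 half_coef by (simp only: mult.left_commute[of 2])
  have "2 * (\<Sum>l\<le>B. Mt l (k+c) (Lt k l h)) = 2 * (\<Sum>l\<le>B. Lt l (k+c) (Mt k l h))"
  proof -
    have "2 * (\<Sum>l\<le>B. Mt l (k+c) (Lt k l h)) = 2 * LL + 2 * Mt k (k+c) (Lt k k h) + 2 * (MF + cst (bt * bt) * SaW)
        + 2 * Mt (k+c) (k+c) (Lt k (k+c) h) + 2 * (HF + cst bt * of_nat c * SZh)"
      unfolding sL low mid hi by (simp only: distrib_left)
    also have "\<dots> = 2 * LL + 2 * Lt k (k+c) (Mt k k h) + 2 * MF
        + 2 * Lt (k+c) (k+c) (Mt k (k+c) h) + 2 * HF"
      unfolding M2a M2b' M4a' M4b C1 ext distrib_left[of 2 MF] distrib_left[of 2 HF] DC_def[symmetric]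
        mult.left_commute[of 2 "cst (bt * bt)"] sym
      by (simp add: cst_mult cst_add cst_of_nat cst_numeral algebra_simps)
    also have "\<dots> = 2 * (\<Sum>l\<le>B. Lt l (k+c) (Mt k l h))"
      unfolding sR by (simp only: distrib_left)
    finally show ?thesis .
  qed
  then show ?thesis by (rule cancel2)
qed

end

lemma TIb: "(\<Sum>l\<le>k + pmax h. Mt l m (Lt k l h)) = (\<Sum>l\<le>k + pmax h. Lt l m (Mt k l h))"
proof -
  define K where "K = k + pmax h"
  define B where "B = K + m"
  have eL: "(\<Sum>l\<le>K. Mt l m (Lt k l h)) = (\<Sum>l\<le>B. Mt l m (Lt k l h))"
    by (rule sum_atMost_ext[of K]) (auto simp: B_def K_def Lt_beyond)
  have eR: "(\<Sum>l\<le>K. Lt l m (Mt k l h)) = (\<Sum>l\<le>B. Lt l m (Mt k l h))"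
    by (rule sum_atMost_ext[of K]) (auto simp: B_def K_def Mt_beyond)
  consider "m = k" | "m < k" | "k < m" by linarith
  then have "(\<Sum>l\<le>B. Mt l m (Lt k l h)) = (\<Sum>l\<le>B. Lt l m (Mt k l h))"
  proof cases
    case 1
    then show ?thesis by (simp add: TIb_eq)
  next
    case 2
    define c where "c = k - m"
    have c: "k = m + c" "1 \<le> c" using 2 by (simp_all add: c_def)
    show ?thesis unfolding c(1) by (rule TIb_mlt[OF c(2)]) (simp add: B_def K_def c(1))
  next
    case 3
    define c where "c = m - k"
    have c: "m = k + c" "1 \<le> c" using 3 by (simp_all add: c_def)
    show ?thesis unfolding c(1) by (rule TIb_kgt[OF c(2)]) (simp add: B_def K_def c(1))
  qed
  then show ?thesis using eL eR by (simp add: K_def)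
qed

lemma comm_gen:
  assumes h: "Yfree h"
  shows "Mop (LambdaY (y k * h)) = LambdaY (Mop (y k * h))"
proof -
  define K where "K = k + pmax h"
  define B where "B = 3 * K"
  have "Mop (LambdaY (y k * h)) = Mop (\<Sum>l\<le>K. y l * Lt k l h)"
    unfolding K_def by (simp only: Lam_gen[OF h order.refl])
  also have "\<dots> = (\<Sum>m\<le>B. y m * (\<Sum>l\<le>K. Mt l m (Lt k l h)))"
  proof (rule compose[where T = Mt])
    fix l g B' assume "Yfree g" "l + pmax g \<le> B'"
    then show "Mop (y l * g) = (\<Sum>m\<le>B'. y m * Mt l m g)" by (rule Mop_gen)
  next
    fix l assume "l \<le> K"
    then show "l + pmax (Lt k l h) \<le> B" using pmax_Lt[of k l h] by (simp add: B_def K_def)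
  qed (auto simp: Mop_add Yfree_Lt h)
  also have "\<dots> = (\<Sum>m\<le>B. y m * (\<Sum>l\<le>K. Lt l m (Mt k l h)))"
    unfolding K_def by (simp only: TIb)
  also have "\<dots> = LambdaY (\<Sum>l\<le>K. y l * Mt k l h)"
  proof (rule compose[where T = Lt, symmetric])
    fix l g B' assume "Yfree g" "l + pmax g \<le> B'"
    then show "LambdaY (y l * g) = (\<Sum>m\<le>B'. y m * Lt l m g)" by (rule Lam_gen)
  next
    fix l assume "l \<le> K"
    then show "l + pmax (Mt k l h) \<le> B" using pmax_Mt[of k l h] by (simp add: B_def K_def)
  qed (auto simp: LambdaY_add Yfree_Mt h)
  also have "\<dots> = LambdaY (Mop (y k * h))"
    unfolding K_def by (simp only: Mop_gen[OF h order.refl])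
  finally show ?thesis .
qed

lemma comm: "ylin G \<Longrightarrow> Mop (LambdaY G) = LambdaY (Mop G)"
  by (induction rule: ylin.induct) (auto simp: comm_gen LambdaY_add Mop_add)

lemma comm_pow: "ylin G \<Longrightarrow> Mop ((LambdaY ^^ n) G) = (LambdaY ^^ n) (Mop G)"
proof (induction n)
  case (Suc n)
  have "ylin ((LambdaY ^^ n) G)"
    using Suc.prems by (induction n) (auto intro: ylin_Lam)
  then show ?case using Suc by (simp add: comm)
qed simp

abbreviation Phi :: "mpoly \<Rightarrow> mpoly" where "Phi G \<equiv> ThetaY (Yplus G)"

lemma Phi_add: "Phi (F + G) = Phi F + Phi G" by (simp add: Yplus_add ThetaY_add)
lemma Phi_sum: "Phi (\<Sum>i\<in>I. f i) = (\<Sum>i\<in>I. Phi (f i))" by (simp add: Yplus_sum ThetaY_sum)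

lemma TIa_gen:
  assumes h: "Yfree h"
  shows "Phi (LambdaY (y k * h)) + Phi (Mop (y k * h)) = Dalpha (Phi (y k * h))"
proof -
  define K where "K = k + pmax h"
  have "Phi (LambdaY (y k * h)) + Phi (Mop (y k * h)) = (\<Sum>m\<le>K. p (m+1) * Lt k m h) + (\<Sum>m\<le>K. p (m+1) * Mt k m h)"
    unfolding K_def Lam_gen[OF h order.refl] Mop_gen[OF h order.refl] Phi_sum
    by (simp add: Phi_gen Yfree_Lt Yfree_Mt h)
  also have "\<dots> = (\<Sum>m\<le>K. p (m+1) * (Lt k m h + Mt k m h))"
    by (simp add: sum.distrib distrib_left)
  also have "\<dots> = Dalpha (p (k+1) * h)" unfolding K_def by (rule TIa)
  also have "\<dots> = Dalpha (Phi (y k * h))" by (simp add: Phi_gen h)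
  finally show ?thesis .
qed

lemma TIa_op: "ylin G \<Longrightarrow> Phi (LambdaY G) + Phi (Mop G) = Dalpha (Phi G)"
proof (induction rule: ylin.induct)
  case (ylin_add a b)
  then show ?case by (simp add: LambdaY_add Mop_add Phi_add Dalpha_add algebra_simps)
qed (simp_all add: TIa_gen)

lemma M_y0:
  assumes h: "Yfree h"
  shows "Mop (y 0 * h) = y 0 * Dalpha h"
proof -
  have "Mop (y 0 * h) = (\<Sum>m\<le>pmax h. y m * Mt 0 m h)" by (rule Mop_gen[OF h]) simp
  also have "\<dots> = (\<Sum>m\<le>pmax h. if m = 0 then y 0 * Dalpha h else 0)"
    by (rule sum.cong[OF refl]) (simp add: Mt_def)
  also have "\<dots> = y 0 * Dalpha h" by simp
  finally show ?thesis .
qed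

lemma inP_Yfree: "inP f \<Longrightarrow> Yfree f"
  unfolding inP_def Yfree_def by auto

lemma ylin_pow: "ylin G \<Longrightarrow> ylin ((LambdaY ^^ n) G)"
  by (induction n) (auto intro: ylin_Lam)

theorem theorem4p9:
  shows "(\<forall>f. inP f \<longrightarrow> Aop 1 f = cst (inverse (1 + bb)) * vr (P 1) * f)
       \<and> (\<forall>j\<ge>1. \<forall>f. inP f \<longrightarrow> Aop (j+1) f = Dalpha (Aop j f) - Aop j (Dalpha f))"
proof (intro conjI allI impI)
  fix f assume f: "inP f"
  have hf: "Yfree (cst (inverse (1 + bb)) * f)" using inP_Yfree[OF f] by (simp add: Yfree_mult)
  have e: "cst (inverse (1 + bb)) * vr (Y 0) * f = y 0 * (cst (inverse (1 + bb)) * f)"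
    by (simp add: mult_ac)
  have "Aop 1 f = Phi (y 0 * (cst (inverse (1 + bb)) * f))"
    unfolding Aop_def e by simp
  also have "\<dots> = p (0+1) * (cst (inverse (1 + bb)) * f)"
    by (rule Phi_gen[OF hf])
  also have "\<dots> = cst (inverse (1 + bb)) * vr (P 1) * f"
    by (simp add: mult_ac)
  finally show "Aop 1 f = cst (inverse (1 + bb)) * vr (P 1) * f" .
next
  fix j :: nat and f assume j: "1 \<le> j" and f: "inP f"
  define h where "h = cst (inverse (1 + bb)) * f"
  have hf: "Yfree h" using inP_Yfree[OF f] by (simp add: Yfree_mult h_def)
  define G where "G = (LambdaY ^^ (j - 1)) (y 0 * h)"
  have yG: "ylin G" unfolding G_def by (rule ylin_pow) (rule ylin_gen[OF hf])
  have A1: "Aop j f = Phi G" by (simp add: Aop_def G_def h_def mult_ac)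
  have A2: "Aop (j+1) f = Phi (LambdaY G)"
  proof -
    obtain n where n: "j = Suc n" using j by (cases j) auto
    have "(LambdaY ^^ j) (y 0 * h) = LambdaY G"
      unfolding G_def n by simp
    then show ?thesis by (simp add: Aop_def h_def mult_ac)
  qed
  have A3: "Aop j (Dalpha f) = Phi (Mop G)"
  proof -
    have e: "cst (inverse (1+bb)) * vr (Y 0) * Dalpha f = y 0 * Dalpha h"
      unfolding h_def Dalpha_cst by (simp add: mult_ac)
    have "Aop j (Dalpha f) = Phi ((LambdaY ^^ (j - 1)) (y 0 * Dalpha h))"
      unfolding Aop_def e ..
    also have "y 0 * Dalpha h = Mop (y 0 * h)" by (simp add: M_y0 hf)
    also have "(LambdaY ^^ (j - 1)) (Mop (y 0 * h)) = Mop G"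
      unfolding G_def by (rule comm_pow[symmetric]) (rule ylin_gen[OF hf])
    finally show ?thesis .
  qed
  show "Aop (j+1) f = Dalpha (Aop j f) - Aop j (Dalpha f)"
    unfolding A1 A2 A3 using TIa_op[OF yG] by (simp add: algebra_simps)
qed

end
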